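(* Let $M\models\mathrm{AA}$ and let $I\subseteq M$ be a proper cut. Then (i) $I$ is not formula-definable; (ii) if $1\le y$ for every $y\in M\setminus I$, then $M\setminus I$ is not formula-definable.
   Context: Structures are complete metric spaces of diameter at most $1$ in the language $L=\{+,\cdot,\wedge,\vee,0,1\}$ (operations $1$-Lipschitz, $d$ the only relation symbol). Affine formulas are built from $1$ and atomic formulas $d(t_1,t_2)$ using $+$, scalar multiplication by reals, $\sup_x$, $\inf_x$. $\mathrm{AA}$ is the set of all closed affine conditions true in every model of first-order Peano arithmetic (formulated in $L$ with lattice operations min/max and discrete metric). $x\le y$ means $x\wedge y=x$. A cut in $M$ is a nonempty $I\subseteq M$ such that $x\le y\in I$ implies $x\in I$, and $x\in I$ implies $x+1\in I$; it is proper if $I\ne M$. A set $D\subseteq M$ is formula-definable if it is closed and there is an affine formula $\phi(x)$ with parameters from $M$ such that $d(x,D)=\inf_{y\in D}d(x,y)=\phi^M(x)$ for all $x$. *)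

theory Defs
  imports Complex_Main
begin

record 'a lstruct =
  Mdom  :: "'a set"
  Md    :: "'a \<Rightarrow> 'a \<Rightarrow> real"
  Madd  :: "'a \<Rightarrow> 'a \<Rightarrow> 'a"
  Mmul  :: "'a \<Rightarrow> 'a \<Rightarrow> 'a"
  Mmeet :: "'a \<Rightarrow> 'a \<Rightarrow> 'a"
  Mjoin :: "'a \<Rightarrow> 'a \<Rightarrow> 'a"
  Mzero :: "'a"
  Mone  :: "'a"

definition lip_op :: "('a, 'b) lstruct_scheme \<Rightarrow> ('a \<Rightarrow> 'a \<Rightarrow> 'a) \<Rightarrow> bool" where
  "lip_op S f \<longleftrightarrow>
     (\<forall>x\<in>Mdom S. \<forall>y\<in>Mdom S. f x y \<in> Mdom S) \<and>
     (\<forall>x\<in>Mdom S. \<forall>x'\<in>Mdom S. \<forall>y\<in>Mdom S. \<forall>y'\<in>Mdom S.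
        Md S (f x y) (f x' y') \<le> max (Md S x x') (Md S y y'))"

definition m_converges :: "('a, 'b) lstruct_scheme \<Rightarrow> (nat \<Rightarrow> 'a) \<Rightarrow> 'a \<Rightarrow> bool" where
  "m_converges S s x \<longleftrightarrow> (\<forall>e>0. \<exists>N. \<forall>n\<ge>N. Md S (s n) x < e)"

definition m_complete :: "('a, 'b) lstruct_scheme \<Rightarrow> bool" where
  "m_complete S \<longleftrightarrow>
     (\<forall>s. (\<forall>n. s n \<in> Mdom S) \<longrightarrow> (\<forall>e>0. \<exists>N. \<forall>m\<ge>N. \<forall>n\<ge>N. Md S (s m) (s n) < e)
          \<longrightarrow> (\<exists>x\<in>Mdom S. m_converges S s x))"

definition lstructure :: "('a, 'b) lstruct_scheme \<Rightarrow> bool" where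
  "lstructure S \<longleftrightarrow>
     Mdom S \<noteq> {} \<and> Mzero S \<in> Mdom S \<and> Mone S \<in> Mdom S \<and>
     (\<forall>x\<in>Mdom S. \<forall>y\<in>Mdom S. 0 \<le> Md S x y \<and> Md S x y \<le> 1 \<and>
        (Md S x y = 0 \<longleftrightarrow> x = y) \<and> Md S x y = Md S y x) \<and>
     (\<forall>x\<in>Mdom S. \<forall>y\<in>Mdom S. \<forall>z\<in>Mdom S. Md S x z \<le> Md S x y + Md S y z) \<and>
     m_complete S \<and>
     lip_op S (Madd S) \<and> lip_op S (Mmul S) \<and> lip_op S (Mmeet S) \<and> lip_op S (Mjoin S)"

datatype 'p trm = Var nat | Par 'p | Zero | One
  | Add "'p trm" "'p trm" | Mul "'p trm" "'p trm"
  | Meet "'p trm" "'p trm" | Join "'p trm" "'p trm"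

datatype 'p afml = Cst1 | Dst "'p trm" "'p trm"
  | Pls "'p afml" "'p afml" | Scl real "'p afml"
  | SupQ nat "'p afml" | InfQ nat "'p afml"

fun tvars :: "'p trm \<Rightarrow> nat set" where
  "tvars (Var v) = {v}"
| "tvars (Par p) = {}"
| "tvars Zero = {}"
| "tvars One = {}"
| "tvars (Add s t) = tvars s \<union> tvars t"
| "tvars (Mul s t) = tvars s \<union> tvars t"
| "tvars (Meet s t) = tvars s \<union> tvars t"
| "tvars (Join s t) = tvars s \<union> tvars t"

fun fvars :: "'p afml \<Rightarrow> nat set" where
  "fvars Cst1 = {}"
| "fvars (Dst s t) = tvars s \<union> tvars t"
| "fvars (Pls a b) = fvars a \<union> fvars b"
| "fvars (Scl r a) = fvars a"
| "fvars (SupQ v a) = fvars a - {v}"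
| "fvars (InfQ v a) = fvars a - {v}"

fun teval :: "('a, 'b) lstruct_scheme \<Rightarrow> ('p \<Rightarrow> 'a) \<Rightarrow> (nat \<Rightarrow> 'a) \<Rightarrow> 'p trm \<Rightarrow> 'a" where
  "teval S \<pi> \<sigma> (Var v) = \<sigma> v"
| "teval S \<pi> \<sigma> (Par p) = \<pi> p"
| "teval S \<pi> \<sigma> Zero = Mzero S"
| "teval S \<pi> \<sigma> One = Mone S"
| "teval S \<pi> \<sigma> (Add s t) = Madd S (teval S \<pi> \<sigma> s) (teval S \<pi> \<sigma> t)"
| "teval S \<pi> \<sigma> (Mul s t) = Mmul S (teval S \<pi> \<sigma> s) (teval S \<pi> \<sigma> t)"
| "teval S \<pi> \<sigma> (Meet s t) = Mmeet S (teval S \<pi> \<sigma> s) (teval S \<pi> \<sigma> t)"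
| "teval S \<pi> \<sigma> (Join s t) = Mjoin S (teval S \<pi> \<sigma> s) (teval S \<pi> \<sigma> t)"

fun feval :: "('a, 'b) lstruct_scheme \<Rightarrow> ('p \<Rightarrow> 'a) \<Rightarrow> (nat \<Rightarrow> 'a) \<Rightarrow> 'p afml \<Rightarrow> real" where
  "feval S \<pi> \<sigma> Cst1 = 1"
| "feval S \<pi> \<sigma> (Dst s t) = Md S (teval S \<pi> \<sigma> s) (teval S \<pi> \<sigma> t)"
| "feval S \<pi> \<sigma> (Pls a b) = feval S \<pi> \<sigma> a + feval S \<pi> \<sigma> b"
| "feval S \<pi> \<sigma> (Scl r a) = r * feval S \<pi> \<sigma> a"
| "feval S \<pi> \<sigma> (SupQ v a) = (SUP x\<in>Mdom S. feval S \<pi> (\<sigma>(v := x)) a)"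
| "feval S \<pi> \<sigma> (InfQ v a) = (INF x\<in>Mdom S. feval S \<pi> (\<sigma>(v := x)) a)"

text \<open>Affine sentences: no free variables and no parameters. A closed condition is
  written as a sentence \<phi>, standing for the condition "\<phi> \<le> 0".\<close>
definition sentence :: "'p afml \<Rightarrow> bool" where
  "sentence \<phi> \<longleftrightarrow> fvars \<phi> = {} \<and> set_afml \<phi> = {}"

definition satisfies_cond :: "('a, 'b) lstruct_scheme \<Rightarrow> 'p afml \<Rightarrow> bool" where
  "satisfies_cond S \<phi> \<longleftrightarrow>
     (\<forall>\<pi> \<sigma>. range \<sigma> \<subseteq> Mdom S \<longrightarrow> feval S \<pi> \<sigma> \<phi> \<le> 0)"

datatype pterm = PVar nat | P0 | P1 | PAdd pterm pterm | PMul pterm pterm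
datatype pfml = PEq pterm pterm | PNot pfml | PAnd pfml pfml | PEx nat pfml

fun peval :: "('a, 'b) lstruct_scheme \<Rightarrow> (nat \<Rightarrow> 'a) \<Rightarrow> pterm \<Rightarrow> 'a" where
  "peval N \<sigma> (PVar v) = \<sigma> v"
| "peval N \<sigma> P0 = Mzero N"
| "peval N \<sigma> P1 = Mone N"
| "peval N \<sigma> (PAdd s t) = Madd N (peval N \<sigma> s) (peval N \<sigma> t)"
| "peval N \<sigma> (PMul s t) = Mmul N (peval N \<sigma> s) (peval N \<sigma> t)"

fun pholds :: "('a, 'b) lstruct_scheme \<Rightarrow> (nat \<Rightarrow> 'a) \<Rightarrow> pfml \<Rightarrow> bool" where
  "pholds N \<sigma> (PEq s t) = (peval N \<sigma> s = peval N \<sigma> t)"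
| "pholds N \<sigma> (PNot a) = (\<not> pholds N \<sigma> a)"
| "pholds N \<sigma> (PAnd a b) = (pholds N \<sigma> a \<and> pholds N \<sigma> b)"
| "pholds N \<sigma> (PEx v a) = (\<exists>x\<in>Mdom N. pholds N (\<sigma>(v := x)) a)"

definition pa_le :: "('a, 'b) lstruct_scheme \<Rightarrow> 'a \<Rightarrow> 'a \<Rightarrow> bool" where
  "pa_le N x y \<longleftrightarrow> (\<exists>z\<in>Mdom N. Madd N x z = y)"

text \<open>An L-structure arising from a model of first-order PA (language 0,1,+,*;
  axioms of Q with successor x+1, plus the full induction schema with parameters),
  with discrete metric and meet/join = min/max of the arithmetic order.\<close>
definition pa_model :: "('a, 'b) lstruct_scheme \<Rightarrow> bool" where
  "pa_model N \<longleftrightarrow>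
     Mdom N \<noteq> {} \<and> Mzero N \<in> Mdom N \<and> Mone N \<in> Mdom N \<and>
     (\<forall>x\<in>Mdom N. \<forall>y\<in>Mdom N. Madd N x y \<in> Mdom N \<and> Mmul N x y \<in> Mdom N) \<and>
     (\<forall>x\<in>Mdom N. Madd N x (Mone N) \<noteq> Mzero N) \<and>
     (\<forall>x\<in>Mdom N. \<forall>y\<in>Mdom N. Madd N x (Mone N) = Madd N y (Mone N) \<longrightarrow> x = y) \<and>
     (\<forall>x\<in>Mdom N. Madd N x (Mzero N) = x) \<and>
     (\<forall>x\<in>Mdom N. \<forall>y\<in>Mdom N. Madd N x (Madd N y (Mone N)) = Madd N (Madd N x y) (Mone N)) \<and>
     (\<forall>x\<in>Mdom N. Mmul N x (Mzero N) = Mzero N) \<and>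
     (\<forall>x\<in>Mdom N. \<forall>y\<in>Mdom N. Mmul N x (Madd N y (Mone N)) = Madd N (Mmul N x y) x) \<and>
     (\<forall>\<phi> v \<sigma>. range \<sigma> \<subseteq> Mdom N \<longrightarrow>
        pholds N (\<sigma>(v := Mzero N)) \<phi> \<longrightarrow>
        (\<forall>a\<in>Mdom N. pholds N (\<sigma>(v := a)) \<phi> \<longrightarrow> pholds N (\<sigma>(v := Madd N a (Mone N))) \<phi>) \<longrightarrow>
        (\<forall>a\<in>Mdom N. pholds N (\<sigma>(v := a)) \<phi>)) \<and>
     (\<forall>x\<in>Mdom N. \<forall>y\<in>Mdom N. Md N x y = (if x = y then 0 else 1)) \<and>
     (\<forall>x\<in>Mdom N. \<forall>y\<in>Mdom N. Mmeet N x y = (if pa_le N x y then x else y)) \<and>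
     (\<forall>x\<in>Mdom N. \<forall>y\<in>Mdom N. Mjoin N x y = (if pa_le N x y then y else x))"

text \<open>AA: closed affine conditions true in every model of PA. Models are taken with
  universe a set of naturals, i.e. countable models (enough by downward Loewenheim-Skolem).\<close>
definition AA :: "'p afml set" where
  "AA = {\<phi>. sentence \<phi> \<and> (\<forall>N :: nat lstruct. pa_model N \<longrightarrow> satisfies_cond N \<phi>)}"

definition models_AA :: "('a, 'b) lstruct_scheme \<Rightarrow> bool" where
  "models_AA M \<longleftrightarrow> lstructure M \<and> (\<forall>\<phi> \<in> (AA :: 'a afml set). satisfies_cond M \<phi>)"

definition le_M :: "('a, 'b) lstruct_scheme \<Rightarrow> 'a \<Rightarrow> 'a \<Rightarrow> bool" where
  "le_M M x y \<longleftrightarrow> Mmeet M x y = x"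

definition is_cut :: "('a, 'b) lstruct_scheme \<Rightarrow> 'a set \<Rightarrow> bool" where
  "is_cut M I \<longleftrightarrow> I \<subseteq> Mdom M \<and> I \<noteq> {} \<and>
     (\<forall>x\<in>Mdom M. \<forall>y\<in>I. le_M M x y \<longrightarrow> x \<in> I) \<and>
     (\<forall>x\<in>I. Madd M x (Mone M) \<in> I)"

definition proper_cut :: "('a, 'b) lstruct_scheme \<Rightarrow> 'a set \<Rightarrow> bool" where
  "proper_cut M I \<longleftrightarrow> is_cut M I \<and> I \<noteq> Mdom M"

definition m_closed :: "('a, 'b) lstruct_scheme \<Rightarrow> 'a set \<Rightarrow> bool" where
  "m_closed M D \<longleftrightarrow> D \<subseteq> Mdom M \<and>
     (\<forall>s x. (\<forall>n. s n \<in> D) \<longrightarrow> x \<in> Mdom M \<longrightarrow> m_converges M s x \<longrightarrow> x \<in> D)"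

definition dist_to :: "('a, 'b) lstruct_scheme \<Rightarrow> 'a set \<Rightarrow> 'a \<Rightarrow> real" where
  "dist_to M D x = (INF y\<in>D. Md M x y)"

definition formula_definable :: "('a, 'b) lstruct_scheme \<Rightarrow> 'a set \<Rightarrow> bool" where
  "formula_definable M D \<longleftrightarrow> m_closed M D \<and>
     (\<exists>\<phi> :: 'a afml. fvars \<phi> \<subseteq> {0} \<and> set_afml \<phi> \<subseteq> Mdom M \<and>
        (\<forall>x\<in>Mdom M. dist_to M D x = feval M id (\<lambda>_. x) \<phi>))"

end

theory Submission
  imports Defs
begin
fun bvars :: "'p afml \<Rightarrow> nat set" where
  "bvars Cst1 = {}"
| "bvars (Dst s t) = {}"
| "bvars (Pls a b) = bvars a \<union> bvars b"
| "bvars (Scl r a) = bvars a"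
| "bvars (SupQ v a) = insert v (bvars a)"
| "bvars (InfQ v a) = insert v (bvars a)"

fun tsub :: "(nat \<Rightarrow> 'q trm) \<Rightarrow> ('p \<Rightarrow> 'q trm) \<Rightarrow> 'p trm \<Rightarrow> 'q trm" where
  "tsub \<rho> \<tau> (Var v) = \<rho> v"
| "tsub \<rho> \<tau> (Par p) = \<tau> p"
| "tsub \<rho> \<tau> Zero = Zero"
| "tsub \<rho> \<tau> One = One"
| "tsub \<rho> \<tau> (Add s t) = Add (tsub \<rho> \<tau> s) (tsub \<rho> \<tau> t)"
| "tsub \<rho> \<tau> (Mul s t) = Mul (tsub \<rho> \<tau> s) (tsub \<rho> \<tau> t)"
| "tsub \<rho> \<tau> (Meet s t) = Meet (tsub \<rho> \<tau> s) (tsub \<rho> \<tau> t)"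
| "tsub \<rho> \<tau> (Join s t) = Join (tsub \<rho> \<tau> s) (tsub \<rho> \<tau> t)"

fun fsub :: "(nat \<Rightarrow> 'q trm) \<Rightarrow> ('p \<Rightarrow> 'q trm) \<Rightarrow> 'p afml \<Rightarrow> 'q afml" where
  "fsub \<rho> \<tau> Cst1 = Cst1"
| "fsub \<rho> \<tau> (Dst s t) = Dst (tsub \<rho> \<tau> s) (tsub \<rho> \<tau> t)"
| "fsub \<rho> \<tau> (Pls a b) = Pls (fsub \<rho> \<tau> a) (fsub \<rho> \<tau> b)"
| "fsub \<rho> \<tau> (Scl r a) = Scl r (fsub \<rho> \<tau> a)"
| "fsub \<rho> \<tau> (SupQ v a) = SupQ v (fsub (\<rho>(v := Var v)) \<tau> a)"
| "fsub \<rho> \<tau> (InfQ v a) = InfQ v (fsub (\<rho>(v := Var v)) \<tau> a)"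

fun close :: "nat list \<Rightarrow> 'p afml \<Rightarrow> 'p afml" where
  "close [] a = a"
| "close (v # vs) a = SupQ v (close vs a)"

lemma finite_tvars: "finite (tvars t)" by (induct t) auto
lemma finite_bvars: "finite (bvars a)" by (induct a) auto
lemma finite_set_trm: "finite (set_trm t)" by (induct t) auto
lemma finite_set_afml: "finite (set_afml a)" by (induct a) (auto simp: finite_set_trm)

lemma teval_cong: "(\<forall>u\<in>tvars t. \<sigma> u = \<sigma>' u) \<Longrightarrow> teval S \<pi> \<sigma> t = teval S \<pi> \<sigma>' t"
  by (induct t) auto

lemma teval_pcong: "(\<forall>p\<in>set_trm t. \<pi> p = \<pi>' p) \<Longrightarrow> teval S \<pi> \<sigma> t = teval S \<pi>' \<sigma> t"
  by (induct t) auto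

lemma feval_pcong: "(\<forall>p\<in>set_afml a. \<pi> p = \<pi>' p) \<Longrightarrow> feval S \<pi> \<sigma> a = feval S \<pi>' \<sigma> a"
proof (induct a arbitrary: \<sigma>)
  case (Dst s t)
  have "teval S \<pi> \<sigma> s = teval S \<pi>' \<sigma> s" by (rule teval_pcong) (use Dst in auto)
  moreover have "teval S \<pi> \<sigma> t = teval S \<pi>' \<sigma> t" by (rule teval_pcong) (use Dst in auto)
  ultimately show ?case by simp
qed auto

lemma tsub_eval:
  "(\<forall>p\<in>set_trm t. teval S \<pi>' \<sigma> (\<tau> p) = \<pi> p) \<Longrightarrow>
   teval S \<pi>' \<sigma> (tsub \<rho> \<tau> t) = teval S \<pi> (\<lambda>u. teval S \<pi>' \<sigma> (\<rho> u)) t"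
  by (induct t) auto

lemma fsub_eval:
  assumes "\<forall>p\<in>set_afml a. teval S \<pi>' \<sigma> (\<tau> p) = \<pi> p"
    and "\<forall>p. tvars (\<tau> p) \<inter> bvars a = {}"
    and "\<forall>u. \<rho> u = Var u \<or> tvars (\<rho> u) \<inter> bvars a = {}"
  shows "feval S \<pi>' \<sigma> (fsub \<rho> \<tau> a) = feval S \<pi> (\<lambda>u. teval S \<pi>' \<sigma> (\<rho> u)) a"
  using assms
proof (induct a arbitrary: \<sigma> \<rho>)
  case (Dst s t)
  have "teval S \<pi>' \<sigma> (tsub \<rho> \<tau> s) = teval S \<pi> (\<lambda>u. teval S \<pi>' \<sigma> (\<rho> u)) s"
    by (rule tsub_eval) (use Dst in auto)
  moreover have "teval S \<pi>' \<sigma> (tsub \<rho> \<tau> t) = teval S \<pi> (\<lambda>u. teval S \<pi>' \<sigma> (\<rho> u)) t"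
    by (rule tsub_eval) (use Dst in auto)
  ultimately show ?case by simp
next
  case (Pls a b)
  have "feval S \<pi>' \<sigma> (fsub \<rho> \<tau> a) = feval S \<pi> (\<lambda>u. teval S \<pi>' \<sigma> (\<rho> u)) a"
    by (rule Pls.hyps(1)) (use Pls.prems in auto)
  moreover have "feval S \<pi>' \<sigma> (fsub \<rho> \<tau> b) = feval S \<pi> (\<lambda>u. teval S \<pi>' \<sigma> (\<rho> u)) b"
    by (rule Pls.hyps(2)) (use Pls.prems in auto)
  ultimately show ?case by simp
next
  case (Scl r a)
  have "feval S \<pi>' \<sigma> (fsub \<rho> \<tau> a) = feval S \<pi> (\<lambda>u. teval S \<pi>' \<sigma> (\<rho> u)) a"
    by (rule Scl.hyps(1)) (use Scl.prems in auto)
  then show ?case by simp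
next
  case (SupQ v a)
  have "\<And>x. feval S \<pi>' (\<sigma>(v := x)) (fsub (\<rho>(v := Var v)) \<tau> a)
      = feval S \<pi> ((\<lambda>u. teval S \<pi>' \<sigma> (\<rho> u))(v := x)) a"
  proof -
    fix x
    have 1: "\<forall>p\<in>set_afml a. teval S \<pi>' (\<sigma>(v := x)) (\<tau> p) = \<pi> p"
    proof
      fix p assume "p \<in> set_afml a"
      have "teval S \<pi>' (\<sigma>(v := x)) (\<tau> p) = teval S \<pi>' \<sigma> (\<tau> p)"
        using SupQ.prems(2) by (intro teval_cong) auto
      then show "teval S \<pi>' (\<sigma>(v := x)) (\<tau> p) = \<pi> p" using SupQ.prems(1) \<open>p \<in> set_afml a\<close> by simp
    qed
    have 2: "\<forall>p. tvars (\<tau> p) \<inter> bvars a = {}" using SupQ.prems(2) by auto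
    have 3: "\<forall>u. (\<rho>(v := Var v)) u = Var u \<or> tvars ((\<rho>(v := Var v)) u) \<inter> bvars a = {}"
      using SupQ.prems(3) by auto
    have e: "(\<lambda>u. teval S \<pi>' (\<sigma>(v := x)) ((\<rho>(v := Var v)) u)) = (\<lambda>u. teval S \<pi>' \<sigma> (\<rho> u))(v := x)"
    proof
      fix u show "teval S \<pi>' (\<sigma>(v := x)) ((\<rho>(v := Var v)) u) = ((\<lambda>u. teval S \<pi>' \<sigma> (\<rho> u))(v := x)) u"
      proof (cases "u = v")
        case False
        then have "\<rho> u = Var u \<or> tvars (\<rho> u) \<inter> bvars (SupQ v a) = {}" using SupQ.prems(3) by auto
        then show ?thesis using False by (auto intro: teval_cong)
      qed simp
    qed
    show "feval S \<pi>' (\<sigma>(v := x)) (fsub (\<rho>(v := Var v)) \<tau> a)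
      = feval S \<pi> ((\<lambda>u. teval S \<pi>' \<sigma> (\<rho> u))(v := x)) a"
      using SupQ.hyps[OF 1 2 3] arg_cong[OF e, of "\<lambda>f. feval S \<pi> f a"] by (rule trans)
  qed
  then show ?case by simp
next
  case (InfQ v a)
  have "\<And>x. feval S \<pi>' (\<sigma>(v := x)) (fsub (\<rho>(v := Var v)) \<tau> a)
      = feval S \<pi> ((\<lambda>u. teval S \<pi>' \<sigma> (\<rho> u))(v := x)) a"
  proof -
    fix x
    have 1: "\<forall>p\<in>set_afml a. teval S \<pi>' (\<sigma>(v := x)) (\<tau> p) = \<pi> p"
    proof
      fix p assume "p \<in> set_afml a"
      have "teval S \<pi>' (\<sigma>(v := x)) (\<tau> p) = teval S \<pi>' \<sigma> (\<tau> p)"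
        using InfQ.prems(2) by (intro teval_cong) auto
      then show "teval S \<pi>' (\<sigma>(v := x)) (\<tau> p) = \<pi> p" using InfQ.prems(1) \<open>p \<in> set_afml a\<close> by simp
    qed
    have 2: "\<forall>p. tvars (\<tau> p) \<inter> bvars a = {}" using InfQ.prems(2) by auto
    have 3: "\<forall>u. (\<rho>(v := Var v)) u = Var u \<or> tvars ((\<rho>(v := Var v)) u) \<inter> bvars a = {}"
      using InfQ.prems(3) by auto
    have e: "(\<lambda>u. teval S \<pi>' (\<sigma>(v := x)) ((\<rho>(v := Var v)) u)) = (\<lambda>u. teval S \<pi>' \<sigma> (\<rho> u))(v := x)"
    proof
      fix u show "teval S \<pi>' (\<sigma>(v := x)) ((\<rho>(v := Var v)) u) = ((\<lambda>u. teval S \<pi>' \<sigma> (\<rho> u))(v := x)) u"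
      proof (cases "u = v")
        case False
        then have "\<rho> u = Var u \<or> tvars (\<rho> u) \<inter> bvars (InfQ v a) = {}" using InfQ.prems(3) by auto
        then show ?thesis using False by (auto intro: teval_cong)
      qed simp
    qed
    show "feval S \<pi>' (\<sigma>(v := x)) (fsub (\<rho>(v := Var v)) \<tau> a)
      = feval S \<pi> ((\<lambda>u. teval S \<pi>' \<sigma> (\<rho> u))(v := x)) a"
      using InfQ.hyps[OF 1 2 3] arg_cong[OF e, of "\<lambda>f. feval S \<pi> f a"] by (rule trans)
  qed
  then show ?case by simp
qed simp

lemma set_fsub: "(\<forall>u. set_trm (\<rho> u) = {}) \<Longrightarrow> (\<forall>p. set_trm (\<tau> p) = {}) \<Longrightarrow> set_afml (fsub \<rho> \<tau> a) = {}"
proof (induct a arbitrary: \<rho>)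
  case (Dst s t)
  have "\<And>t. set_trm (tsub \<rho> \<tau> t) = {}" subgoal for t using Dst by (induct t) auto done
  then show ?case by simp
qed auto

lemma tvars_tsub: "tvars (tsub \<rho> \<tau> t) \<subseteq> (\<Union>u\<in>tvars t. tvars (\<rho> u)) \<union> (\<Union>p\<in>set_trm t. tvars (\<tau> p))"
  by (induct t) auto

lemma fvars_fsub: "fvars (fsub \<rho> \<tau> a) \<subseteq> (\<Union>u\<in>fvars a. tvars (\<rho> u)) \<union> (\<Union>p. tvars (\<tau> p))"
proof (induct a arbitrary: \<rho>)
  case (Dst s t) then show ?case using tvars_tsub[of \<rho> \<tau> s] tvars_tsub[of \<rho> \<tau> t] by auto
next
  case (Pls a b)
  have "fvars (fsub \<rho> \<tau> a) \<subseteq> (\<Union>u\<in>fvars a. tvars (\<rho> u)) \<union> (\<Union>p. tvars (\<tau> p))" by (rule Pls.hyps(1))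
  moreover have "fvars (fsub \<rho> \<tau> b) \<subseteq> (\<Union>u\<in>fvars b. tvars (\<rho> u)) \<union> (\<Union>p. tvars (\<tau> p))" by (rule Pls.hyps(2))
  ultimately show ?case by auto
next
  case (SupQ v a)
  show ?case
  proof
    fix x assume x: "x \<in> fvars (fsub \<rho> \<tau> (SupQ v a))"
    then have xv: "x \<noteq> v" and "x \<in> fvars (fsub (\<rho>(v := Var v)) \<tau> a)" by auto
    then have "x \<in> (\<Union>u\<in>fvars a. tvars ((\<rho>(v := Var v)) u)) \<union> (\<Union>p. tvars (\<tau> p))" using SupQ.hyps by blast
    then show "x \<in> (\<Union>u\<in>fvars (SupQ v a). tvars (\<rho> u)) \<union> (\<Union>p. tvars (\<tau> p))"
    proof
      assume "x \<in> (\<Union>u\<in>fvars a. tvars ((\<rho>(v := Var v)) u))"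
      then obtain u where u: "u \<in> fvars a" "x \<in> tvars ((\<rho>(v := Var v)) u)" by blast
      with xv have "u \<noteq> v" by (cases "u = v") auto
      with u show ?thesis by auto
    qed auto
  qed
next
  case (InfQ v a)
  show ?case
  proof
    fix x assume x: "x \<in> fvars (fsub \<rho> \<tau> (InfQ v a))"
    then have xv: "x \<noteq> v" and "x \<in> fvars (fsub (\<rho>(v := Var v)) \<tau> a)" by auto
    then have "x \<in> (\<Union>u\<in>fvars a. tvars ((\<rho>(v := Var v)) u)) \<union> (\<Union>p. tvars (\<tau> p))" using InfQ.hyps by blast
    then show "x \<in> (\<Union>u\<in>fvars (InfQ v a). tvars (\<rho> u)) \<union> (\<Union>p. tvars (\<tau> p))"
    proof
      assume "x \<in> (\<Union>u\<in>fvars a. tvars ((\<rho>(v := Var v)) u))"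
      then obtain u where u: "u \<in> fvars a" "x \<in> tvars ((\<rho>(v := Var v)) u)" by blast
      with xv have "u \<noteq> v" by (cases "u = v") auto
      with u show ?thesis by auto
    qed auto
  qed
qed auto

lemma fvars_close: "fvars (close vs a) = fvars a - set vs"
  by (induct vs) auto
lemma set_close: "set_afml (close vs a) = set_afml a"
  by (induct vs) auto

definition mbounded :: "('a, 'b) lstruct_scheme \<Rightarrow> bool" where
  "mbounded S \<longleftrightarrow> Mdom S \<noteq> {} \<and> Mzero S \<in> Mdom S \<and> Mone S \<in> Mdom S \<and>
    (\<forall>x\<in>Mdom S. \<forall>y\<in>Mdom S. Madd S x y \<in> Mdom S \<and> Mmul S x y \<in> Mdom S \<and>
       Mmeet S x y \<in> Mdom S \<and> Mjoin S x y \<in> Mdom S \<and> 0 \<le> Md S x y \<and> Md S x y \<le> 1)"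

lemma lstructure_mb: "lstructure S \<Longrightarrow> mbounded S"
proof -
  assume "lstructure S"
  then have a: "Mdom S \<noteq> {}" "Mzero S \<in> Mdom S" "Mone S \<in> Mdom S"
    "\<forall>x\<in>Mdom S. \<forall>y\<in>Mdom S. 0 \<le> Md S x y \<and> Md S x y \<le> 1"
    "lip_op S (Madd S)" "lip_op S (Mmul S)" "lip_op S (Mmeet S)" "lip_op S (Mjoin S)"
    unfolding lstructure_def by auto
  then show ?thesis unfolding mbounded_def lip_op_def by simp
qed

lemma pa_mb: "pa_model N \<Longrightarrow> mbounded N"
  unfolding pa_model_def mbounded_def by auto

lemma range_upd: "range \<sigma> \<subseteq> A \<Longrightarrow> x \<in> A \<Longrightarrow> range (\<sigma>(v := x)) \<subseteq> A"
  by auto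

lemma teval_in: "mbounded S \<Longrightarrow> range \<sigma> \<subseteq> Mdom S \<Longrightarrow> (\<forall>p\<in>set_trm t. \<pi> p \<in> Mdom S) \<Longrightarrow>
   teval S \<pi> \<sigma> t \<in> Mdom S"
  by (induct t) (auto simp: mbounded_def)

fun bnd :: "'p afml \<Rightarrow> real" where
  "bnd Cst1 = 1"
| "bnd (Dst s t) = 1"
| "bnd (Pls a b) = bnd a + bnd b"
| "bnd (Scl r a) = \<bar>r\<bar> * bnd a"
| "bnd (SupQ v a) = bnd a"
| "bnd (InfQ v a) = bnd a"

lemma abs_SUP_le:
  fixes f :: "'x \<Rightarrow> real"
  assumes "A \<noteq> {}" "\<forall>x\<in>A. \<bar>f x\<bar> \<le> b"
  shows "\<bar>SUP x\<in>A. f x\<bar> \<le> b"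
proof -
  have bdd: "bdd_above (f ` A)" using assms(2) by (auto intro!: bdd_aboveI[of _ b] simp: abs_le_iff)
  have 1: "(SUP x\<in>A. f x) \<le> b" using assms by (intro cSUP_least) (auto simp: abs_le_iff)
  obtain x0 where x0: "x0 \<in> A" using assms(1) by blast
  have "f x0 \<le> (SUP x\<in>A. f x)" using bdd x0 by (rule cSUP_upper2) simp
  moreover have "- b \<le> f x0" using assms(2) x0 by (auto simp: abs_le_iff)
  ultimately show ?thesis using 1 by (auto simp: abs_le_iff)
qed

lemma abs_INF_le:
  fixes f :: "'x \<Rightarrow> real"
  assumes "A \<noteq> {}" "\<forall>x\<in>A. \<bar>f x\<bar> \<le> b"
  shows "\<bar>INF x\<in>A. f x\<bar> \<le> b"
proof -
  have bdd: "bdd_below (f ` A)" using assms(2) by (auto intro!: bdd_belowI[of _ "-b"] simp: abs_le_iff)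
  have 1: "-b \<le> (INF x\<in>A. f x)" using assms by (intro cINF_greatest) (auto simp: abs_le_iff)
  obtain x0 where x0: "x0 \<in> A" using assms(1) by blast
  have "(INF x\<in>A. f x) \<le> f x0" using bdd x0 by (rule cINF_lower2) simp
  moreover have "f x0 \<le> b" using assms(2) x0 by (auto simp: abs_le_iff)
  ultimately show ?thesis using 1 by (auto simp: abs_le_iff)
qed

lemma feval_bnd:
  assumes "mbounded S" "range \<sigma> \<subseteq> Mdom S" "\<forall>p\<in>set_afml a. \<pi> p \<in> Mdom S"
  shows "\<bar>feval S \<pi> \<sigma> a\<bar> \<le> bnd a"
  using assms(2,3)
proof (induct a arbitrary: \<sigma>)
  case (Dst s t)
  have "teval S \<pi> \<sigma> s \<in> Mdom S" "teval S \<pi> \<sigma> t \<in> Mdom S"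
    using Dst assms(1) by (auto intro!: teval_in)
  then show ?case using assms(1) unfolding mbounded_def by auto
next
  case (Pls a b)
  have "\<bar>feval S \<pi> \<sigma> a\<bar> \<le> bnd a" "\<bar>feval S \<pi> \<sigma> b\<bar> \<le> bnd b" using Pls by auto
  then show ?case by simp
next
  case (Scl r a)
  have "\<bar>feval S \<pi> \<sigma> a\<bar> \<le> bnd a" using Scl by auto
  then show ?case by (simp add: abs_mult mult_left_mono)
next
  case (SupQ v a)
  have "\<forall>x\<in>Mdom S. \<bar>feval S \<pi> (\<sigma>(v := x)) a\<bar> \<le> bnd a"
    using SupQ by (auto intro!: SupQ.hyps range_upd)
  then show ?case using assms(1) unfolding mbounded_def by (auto intro: abs_SUP_le)
next
  case (InfQ v a)
  have "\<forall>x\<in>Mdom S. \<bar>feval S \<pi> (\<sigma>(v := x)) a\<bar> \<le> bnd a"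
    using InfQ by (auto intro!: InfQ.hyps range_upd)
  then show ?case using assms(1) unfolding mbounded_def by (auto intro: abs_INF_le)
qed simp

lemma feval_bdd_above:
  assumes "mbounded S" "range \<sigma> \<subseteq> Mdom S" "\<forall>p\<in>set_afml a. \<pi> p \<in> Mdom S"
  shows "bdd_above ((\<lambda>x. feval S \<pi> (\<sigma>(v := x)) a) ` Mdom S)"
proof (rule bdd_aboveI[of _ "bnd a"])
  fix y assume "y \<in> (\<lambda>x. feval S \<pi> (\<sigma>(v := x)) a) ` Mdom S"
  then obtain x where "x \<in> Mdom S" "y = feval S \<pi> (\<sigma>(v := x)) a" by blast
  then show "y \<le> bnd a" using feval_bnd[OF assms(1) range_upd[OF assms(2)] assms(3)] by (auto simp: abs_le_iff)
qed

lemma feval_bdd_below: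
  assumes "mbounded S" "range \<sigma> \<subseteq> Mdom S" "\<forall>p\<in>set_afml a. \<pi> p \<in> Mdom S"
  shows "bdd_below ((\<lambda>x. feval S \<pi> (\<sigma>(v := x)) a) ` Mdom S)"
proof (rule bdd_belowI[of _ "- bnd a"])
  fix y assume "y \<in> (\<lambda>x. feval S \<pi> (\<sigma>(v := x)) a) ` Mdom S"
  then obtain x where "x \<in> Mdom S" "y = feval S \<pi> (\<sigma>(v := x)) a" by blast
  then show "- bnd a \<le> y" using feval_bnd[OF assms(1) range_upd[OF assms(2)] assms(3), of x v] by (simp add: abs_le_iff)
qed

lemma close_le:
  assumes "mbounded S" "\<forall>p\<in>set_afml a. \<pi> p \<in> Mdom S"
  shows "range \<sigma> \<subseteq> Mdom S \<Longrightarrow> feval S \<pi> \<sigma> a \<le> feval S \<pi> \<sigma> (close vs a)"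
proof (induct vs arbitrary: \<sigma>)
  case (Cons v vs)
  have "feval S \<pi> \<sigma> a \<le> feval S \<pi> (\<sigma>(v := \<sigma> v)) (close vs a)" using Cons by simp
  also have "\<dots> \<le> (SUP x\<in>Mdom S. feval S \<pi> (\<sigma>(v := x)) (close vs a))"
    using Cons.prems by (intro cSUP_upper feval_bdd_above[OF assms(1)]) (auto simp: set_close assms(2))
  finally show ?case by simp
qed simp

lemma close_N:
  assumes "Mdom S \<noteq> {}" "\<forall>\<sigma>. range \<sigma> \<subseteq> Mdom S \<longrightarrow> feval S \<pi> \<sigma> a \<le> 0"
  shows "range \<sigma> \<subseteq> Mdom S \<Longrightarrow> feval S \<pi> \<sigma> (close vs a) \<le> 0"
proof (induct vs arbitrary: \<sigma>)
  case Nil then show ?case using assms by simp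
next
  case (Cons v vs)
  have "\<forall>x\<in>Mdom S. feval S \<pi> (\<sigma>(v := x)) (close vs a) \<le> 0"
    using Cons by (auto intro!: Cons.hyps range_upd)
  then show ?case using assms(1) by (simp, intro cSUP_least) auto
qed

lemma sat_close_M:
  assumes "mbounded S" "satisfies_cond S (close vs a)" "set_afml a = {}" "range \<sigma> \<subseteq> Mdom S"
  shows "feval S \<pi> \<sigma> a \<le> 0"
proof -
  have "feval S \<pi> \<sigma> a \<le> feval S \<pi> \<sigma> (close vs a)" using close_le[OF assms(1), of a \<pi> \<sigma> vs] assms by simp
  also have "\<dots> \<le> 0" using assms(2,4) unfolding satisfies_cond_def by blast
  finally show ?thesis .
qed

section \<open>PA model facts\<close>

context
  fixes N :: "('a, 'b) lstruct_scheme"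
  assumes pa: "pa_model N"
begin

lemma pa_ne: "Mdom N \<noteq> {}" using pa unfolding pa_model_def by (elim conjE) simp
lemma pa_0: "Mzero N \<in> Mdom N" using pa unfolding pa_model_def by (elim conjE) simp
lemma pa_1: "Mone N \<in> Mdom N" using pa unfolding pa_model_def by (elim conjE) simp
lemma pa_add_in: "x \<in> Mdom N \<Longrightarrow> y \<in> Mdom N \<Longrightarrow> Madd N x y \<in> Mdom N" using pa unfolding pa_model_def by (elim conjE) simp
lemma pa_sne0: "x \<in> Mdom N \<Longrightarrow> Madd N x (Mone N) \<noteq> Mzero N" using pa unfolding pa_model_def by (elim conjE) simp
lemma pa_sinj: "x \<in> Mdom N \<Longrightarrow> y \<in> Mdom N \<Longrightarrow> Madd N x (Mone N) = Madd N y (Mone N) \<Longrightarrow> x = y"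
  using pa unfolding pa_model_def by (elim conjE) simp
lemma pa_add0: "x \<in> Mdom N \<Longrightarrow> Madd N x (Mzero N) = x" using pa unfolding pa_model_def by (elim conjE) simp
lemma pa_addS: "x \<in> Mdom N \<Longrightarrow> y \<in> Mdom N \<Longrightarrow> Madd N x (Madd N y (Mone N)) = Madd N (Madd N x y) (Mone N)"
  using pa unfolding pa_model_def by (elim conjE) simp
lemma pa_ind: "range \<sigma> \<subseteq> Mdom N \<Longrightarrow> pholds N (\<sigma>(v := Mzero N)) \<phi> \<Longrightarrow>
        (\<forall>a\<in>Mdom N. pholds N (\<sigma>(v := a)) \<phi> \<longrightarrow> pholds N (\<sigma>(v := Madd N a (Mone N))) \<phi>) \<Longrightarrow>
        (\<forall>a\<in>Mdom N. pholds N (\<sigma>(v := a)) \<phi>)"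
  using pa unfolding pa_model_def by (elim conjE) simp
lemma pa_d: "x \<in> Mdom N \<Longrightarrow> y \<in> Mdom N \<Longrightarrow> Md N x y = (if x = y then 0 else 1)"
  using pa unfolding pa_model_def by (elim conjE) simp
lemma pa_meet: "x \<in> Mdom N \<Longrightarrow> y \<in> Mdom N \<Longrightarrow> Mmeet N x y = (if pa_le N x y then x else y)"
  using pa unfolding pa_model_def by (elim conjE) simp
lemma pa_join: "x \<in> Mdom N \<Longrightarrow> y \<in> Mdom N \<Longrightarrow> Mjoin N x y = (if pa_le N x y then y else x)"
  using pa unfolding pa_model_def by (elim conjE) simp

lemma pa_zero_add: "y \<in> Mdom N \<Longrightarrow> Madd N (Mzero N) y = y"
proof -
  let ?\<phi> = "PEq (PAdd P0 (PVar 0)) (PVar 0)"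
  let ?\<sigma> = "\<lambda>_::nat. Mzero N"
  have r: "range ?\<sigma> \<subseteq> Mdom N" using pa_0 by auto
  have "\<forall>a\<in>Mdom N. pholds N (?\<sigma>(0 := a)) ?\<phi>"
    by (rule pa_ind[OF r]) (auto simp: pa_add0 pa_0 pa_addS pa_1)
  moreover assume "y \<in> Mdom N"
  ultimately show ?thesis by auto
qed

lemma pa_cases: "y \<in> Mdom N \<Longrightarrow> y = Mzero N \<or> (\<exists>z\<in>Mdom N. y = Madd N z (Mone N))"
proof -
  let ?\<phi> = "PNot (PAnd (PNot (PEq (PVar 0) P0)) (PNot (PEx 1 (PEq (PVar 0) (PAdd (PVar 1) P1)))))"
  let ?\<sigma> = "\<lambda>_::nat. Mzero N"
  have r: "range ?\<sigma> \<subseteq> Mdom N" using pa_0 by auto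
  have "\<forall>a\<in>Mdom N. pholds N (?\<sigma>(0 := a)) ?\<phi>"
    by (rule pa_ind[OF r]) auto
  moreover assume "y \<in> Mdom N"
  ultimately show ?thesis by auto
qed

lemma pa_one_ne0: "Mone N \<noteq> Mzero N"
  using pa_sne0[OF pa_0] pa_zero_add[OF pa_1] by simp

lemma pa_not_le10: "\<not> pa_le N (Mone N) (Mzero N)"
proof
  assume "pa_le N (Mone N) (Mzero N)"
  then obtain z where z: "z \<in> Mdom N" "Madd N (Mone N) z = Mzero N" unfolding pa_le_def by blast
  from pa_cases[OF z(1)] show False
  proof
    assume "z = Mzero N" then show False using z pa_add0[OF pa_1] pa_one_ne0 by simp
  next
    assume "\<exists>w\<in>Mdom N. z = Madd N w (Mone N)"
    then obtain w where "w \<in> Mdom N" "z = Madd N w (Mone N)" by blast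
    then show False using z pa_addS[OF pa_1] pa_sne0 pa_add_in[OF pa_1] by force
  qed
qed

end

section \<open>Definability in PA models\<close>

definition pdef :: "('a, 'b) lstruct_scheme \<Rightarrow> ((nat \<Rightarrow> 'a) \<Rightarrow> bool) \<Rightarrow> bool" where
  "pdef N P \<longleftrightarrow> (\<exists>\<chi>. \<forall>\<sigma>. range \<sigma> \<subseteq> Mdom N \<longrightarrow> (pholds N \<sigma> \<chi> \<longleftrightarrow> P \<sigma>))"

lemma pdef_cong: "pdef N P \<Longrightarrow> (\<And>\<sigma>. range \<sigma> \<subseteq> Mdom N \<Longrightarrow> P \<sigma> = Q \<sigma>) \<Longrightarrow> pdef N Q"
  unfolding pdef_def by metis

lemma pdef_eq: "pdef N (\<lambda>\<sigma>. peval N \<sigma> s = peval N \<sigma> t)"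
  unfolding pdef_def by (rule exI[of _ "PEq s t"]) simp

lemma pdef_not: "pdef N P \<Longrightarrow> pdef N (\<lambda>\<sigma>. \<not> P \<sigma>)"
  unfolding pdef_def by (metis pholds.simps(2))

lemma pdef_and: "pdef N P \<Longrightarrow> pdef N Q \<Longrightarrow> pdef N (\<lambda>\<sigma>. P \<sigma> \<and> Q \<sigma>)"
  unfolding pdef_def by (metis pholds.simps(3))

lemma pdef_or: "pdef N P \<Longrightarrow> pdef N Q \<Longrightarrow> pdef N (\<lambda>\<sigma>. P \<sigma> \<or> Q \<sigma>)"
  by (rule pdef_cong[OF pdef_not[OF pdef_and[OF pdef_not pdef_not]]]) auto

lemma pdef_ex: "pdef N P \<Longrightarrow> pdef N (\<lambda>\<sigma>. \<exists>x\<in>Mdom N. P (\<sigma>(v := x)))"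
proof -
  assume "pdef N P"
  then obtain \<chi> where \<chi>: "\<forall>\<sigma>. range \<sigma> \<subseteq> Mdom N \<longrightarrow> (pholds N \<sigma> \<chi> \<longleftrightarrow> P \<sigma>)" unfolding pdef_def by blast
  show ?thesis unfolding pdef_def
  proof (rule exI[of _ "PEx v \<chi>"], intro allI impI)
    fix \<sigma> :: "nat \<Rightarrow> 'a" assume r: "range \<sigma> \<subseteq> Mdom N"
    show "pholds N \<sigma> (PEx v \<chi>) = (\<exists>x\<in>Mdom N. P (\<sigma>(v := x)))"
      using \<chi> range_upd[OF r] by auto
  qed
qed

lemma pdef_all: "pdef N P \<Longrightarrow> pdef N (\<lambda>\<sigma>. \<forall>x\<in>Mdom N. P (\<sigma>(v := x)))"
  by (rule pdef_cong[OF pdef_not[OF pdef_ex[OF pdef_not]]]) auto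

lemma pdef_const: "pdef N (\<lambda>\<sigma>. b)"
proof (cases b)
  case True then show ?thesis
    by (intro pdef_cong[OF pdef_eq[of N P0 P0]]) auto
next
  case False then show ?thesis
    by (intro pdef_cong[OF pdef_not[OF pdef_eq[of N P0 P0]]]) auto
qed

lemma pdef_fin_ex: "finite A \<Longrightarrow> (\<And>a. a \<in> A \<Longrightarrow> pdef N (P a)) \<Longrightarrow> pdef N (\<lambda>\<sigma>. \<exists>a\<in>A. P a \<sigma>)"
proof (induct A rule: finite_induct)
  case empty then show ?case using pdef_const[of N False] by simp
next
  case (insert x F)
  have "pdef N (\<lambda>\<sigma>. P x \<sigma> \<or> (\<exists>a\<in>F. P a \<sigma>))" using insert by (intro pdef_or) auto
  then show ?case by simp
qed

lemma fresh_var: "finite (A :: nat set) \<Longrightarrow> \<exists>x. x \<notin> A"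
  by (meson ex_new_if_finite infinite_UNIV_nat)

definition opdef :: "('a, 'b) lstruct_scheme \<Rightarrow> ('a \<Rightarrow> 'a \<Rightarrow> 'a) \<Rightarrow> bool" where
  "opdef N f \<longleftrightarrow> (\<forall>w a b. pdef N (\<lambda>\<sigma>. \<sigma> w = f (\<sigma> a) (\<sigma> b)))"

lemma opdef_add: "opdef N (Madd N)"
  unfolding opdef_def using pdef_eq[of N "PVar _" "PAdd (PVar _) (PVar _)"] by simp

lemma opdef_mul: "opdef N (Mmul N)"
  unfolding opdef_def using pdef_eq[of N "PVar _" "PMul (PVar _) (PVar _)"] by simp

lemma pdef_le: "pdef N (\<lambda>\<sigma>. pa_le N (\<sigma> a) (\<sigma> b))"
proof -
  obtain c where c: "c \<notin> {a, b}" using fresh_var[of "{a,b}"] by auto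
  have "pdef N (\<lambda>\<sigma>. \<exists>x\<in>Mdom N. (\<lambda>\<sigma>. peval N \<sigma> (PAdd (PVar a) (PVar c)) = peval N \<sigma> (PVar b)) (\<sigma>(c := x)))"
    by (rule pdef_ex[OF pdef_eq])
  then show ?thesis
    by (rule pdef_cong) (use c in \<open>auto simp: pa_le_def\<close>)
qed

lemma opdef_meet: "pa_model N \<Longrightarrow> opdef N (Mmeet N)"
  unfolding opdef_def
proof (intro allI)
  fix w a b assume pa: "pa_model N"
  have "pdef N (\<lambda>\<sigma>. (pa_le N (\<sigma> a) (\<sigma> b) \<and> peval N \<sigma> (PVar w) = peval N \<sigma> (PVar a)) \<or>
     (\<not> pa_le N (\<sigma> a) (\<sigma> b) \<and> peval N \<sigma> (PVar w) = peval N \<sigma> (PVar b)))" (is "pdef N ?P")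
    by (intro pdef_or pdef_and pdef_not pdef_le pdef_eq)
  then show "pdef N (\<lambda>\<sigma>. \<sigma> w = Mmeet N (\<sigma> a) (\<sigma> b))"
  proof (rule pdef_cong)
    fix \<sigma> :: "nat \<Rightarrow> 'a" assume r: "range \<sigma> \<subseteq> Mdom N"
    then have "\<sigma> a \<in> Mdom N" "\<sigma> b \<in> Mdom N" by auto
    then show "?P \<sigma> = (\<sigma> w = Mmeet N (\<sigma> a) (\<sigma> b))" by (simp add: pa_meet[OF pa])
  qed
qed

lemma opdef_join: "pa_model N \<Longrightarrow> opdef N (Mjoin N)"
  unfolding opdef_def
proof (intro allI)
  fix w a b assume pa: "pa_model N"
  have "pdef N (\<lambda>\<sigma>. (pa_le N (\<sigma> a) (\<sigma> b) \<and> peval N \<sigma> (PVar w) = peval N \<sigma> (PVar b)) \<or>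
     (\<not> pa_le N (\<sigma> a) (\<sigma> b) \<and> peval N \<sigma> (PVar w) = peval N \<sigma> (PVar a)))" (is "pdef N ?P")
    by (intro pdef_or pdef_and pdef_not pdef_le pdef_eq)
  then show "pdef N (\<lambda>\<sigma>. \<sigma> w = Mjoin N (\<sigma> a) (\<sigma> b))"
  proof (rule pdef_cong)
    fix \<sigma> :: "nat \<Rightarrow> 'a" assume r: "range \<sigma> \<subseteq> Mdom N"
    then have "\<sigma> a \<in> Mdom N" "\<sigma> b \<in> Mdom N" by auto
    then show "?P \<sigma> = (\<sigma> w = Mjoin N (\<sigma> a) (\<sigma> b))" by (simp add: pa_join[OF pa])
  qed
qed

lemma pdef_bin:
  assumes pa: "pa_model N" and f: "opdef N f"
    and s: "set_trm s = {}" "\<And>w. w \<notin> tvars s \<Longrightarrow> pdef N (\<lambda>\<sigma>. \<sigma> w = teval N \<pi> \<sigma> s)"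
    and t: "set_trm t = {}" "\<And>w. w \<notin> tvars t \<Longrightarrow> pdef N (\<lambda>\<sigma>. \<sigma> w = teval N \<pi> \<sigma> t)"
    and w: "w \<notin> tvars s \<union> tvars t"
  shows "pdef N (\<lambda>\<sigma>. \<sigma> w = f (teval N \<pi> \<sigma> s) (teval N \<pi> \<sigma> t))"
proof -
  have fin: "finite (tvars s \<union> tvars t \<union> {w})" by (simp add: finite_tvars)
  obtain a where a: "a \<notin> tvars s \<union> tvars t \<union> {w}" using fresh_var[OF fin] by blast
  have fin2: "finite (tvars s \<union> tvars t \<union> {w, a})" by (simp add: finite_tvars)
  obtain b where b: "b \<notin> tvars s \<union> tvars t \<union> {w, a}" using fresh_var[OF fin2] by blast
  let ?R = "\<lambda>\<sigma>. \<sigma> a = teval N \<pi> \<sigma> s \<and> \<sigma> b = teval N \<pi> \<sigma> t \<and> \<sigma> w = f (\<sigma> a) (\<sigma> b)"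
  have "pdef N ?R" using a b f unfolding opdef_def by (intro pdef_and s t) auto
  then have "pdef N (\<lambda>\<sigma>. \<exists>x\<in>Mdom N. (\<lambda>\<sigma>. \<exists>y\<in>Mdom N. ?R (\<sigma>(b := y))) (\<sigma>(a := x)))"
    by (intro pdef_ex)
  then show ?thesis
  proof (rule pdef_cong)
    fix \<sigma> :: "nat \<Rightarrow> 'a" assume r: "range \<sigma> \<subseteq> Mdom N"
    have ins: "teval N \<pi> \<sigma> s \<in> Mdom N" "teval N \<pi> \<sigma> t \<in> Mdom N"
      using teval_in[OF pa_mb[OF pa] r, of s \<pi>] teval_in[OF pa_mb[OF pa] r, of t \<pi>] s(1) t(1) by auto
    have "\<And>x y. teval N \<pi> (\<sigma>(a := x, b := y)) s = teval N \<pi> \<sigma> s"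
      using a b by (intro teval_cong) auto
    moreover have "\<And>x y. teval N \<pi> (\<sigma>(a := x, b := y)) t = teval N \<pi> \<sigma> t"
      using a b by (intro teval_cong) auto
    ultimately show "(\<exists>x\<in>Mdom N. \<exists>y\<in>Mdom N. ?R (\<sigma>(a := x, b := y))) =
        (\<sigma> w = f (teval N \<pi> \<sigma> s) (teval N \<pi> \<sigma> t))"
      using a b ins by auto
  qed
qed

lemma pdef_teval:
  assumes pa: "pa_model N"
  shows "set_trm t = {} \<Longrightarrow> w \<notin> tvars t \<Longrightarrow> pdef N (\<lambda>\<sigma>. \<sigma> w = teval N \<pi> \<sigma> t)"
proof (induct t arbitrary: w)
  case (Var v) then show ?case using pdef_eq[of N "PVar w" "PVar v"] by simp
next
  case Zero then show ?case using pdef_eq[of N "PVar w" "P0"] by simp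
next
  case One then show ?case using pdef_eq[of N "PVar w" "P1"] by simp
next
  case (Add s t) then show ?case using pdef_bin[OF pa opdef_add, of s \<pi> t w] by simp
next
  case (Mul s t) then show ?case using pdef_bin[OF pa opdef_mul, of s \<pi> t w] by simp
next
  case (Meet s t) then show ?case using pdef_bin[OF pa opdef_meet[OF pa], of s \<pi> t w] by simp
next
  case (Join s t) then show ?case using pdef_bin[OF pa opdef_join[OF pa], of s \<pi> t w] by simp
qed simp

lemma pdef_teq:
  assumes pa: "pa_model N" and st: "set_trm s = {}" "set_trm t = {}"
  shows "pdef N (\<lambda>\<sigma>. teval N \<pi> \<sigma> s = teval N \<pi> \<sigma> t)"
proof -
  have fin: "finite (tvars s \<union> tvars t)" by (simp add: finite_tvars)
  obtain w where w: "w \<notin> tvars s \<union> tvars t" using fresh_var[OF fin] by blast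
  let ?R = "\<lambda>\<sigma>. \<sigma> w = teval N \<pi> \<sigma> s \<and> \<sigma> w = teval N \<pi> \<sigma> t"
  have "pdef N ?R" using w by (intro pdef_and pdef_teval[OF pa] st) auto
  then have "pdef N (\<lambda>\<sigma>. \<exists>x\<in>Mdom N. ?R (\<sigma>(w := x)))" by (rule pdef_ex)
  then show ?thesis
  proof (rule pdef_cong)
    fix \<sigma> :: "nat \<Rightarrow> 'a" assume r: "range \<sigma> \<subseteq> Mdom N"
    have ins: "teval N \<pi> \<sigma> s \<in> Mdom N"
      using teval_in[OF pa_mb[OF pa] r, of s \<pi>] st by auto
    have "\<And>x. teval N \<pi> (\<sigma>(w := x)) s = teval N \<pi> \<sigma> s"
      using w by (intro teval_cong) auto
    moreover have "\<And>x. teval N \<pi> (\<sigma>(w := x)) t = teval N \<pi> \<sigma> t"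
      using w by (intro teval_cong) auto
    ultimately show "(\<exists>x\<in>Mdom N. ?R (\<sigma>(w := x))) = (teval N \<pi> \<sigma> s = teval N \<pi> \<sigma> t)"
      using ins by auto
  qed
qed

fun vals :: "'p afml \<Rightarrow> real set" where
  "vals Cst1 = {1}"
| "vals (Dst s t) = {0, 1}"
| "vals (Pls a b) = (\<lambda>(x, y). x + y) ` (vals a \<times> vals b)"
| "vals (Scl r a) = (\<lambda>x. r * x) ` vals a"
| "vals (SupQ v a) = vals a"
| "vals (InfQ v a) = vals a"

lemma finite_vals: "finite (vals a)"
  by (induct a) auto

lemma fin_Sup_eq: "finite (A :: real set) \<Longrightarrow> A \<noteq> {} \<Longrightarrow> (Sup A = c) = (c \<in> A \<and> (\<forall>x\<in>A. x \<le> c))"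
  by (simp add: cSup_eq_Max Max_eq_iff)

lemma fin_Inf_eq: "finite (A :: real set) \<Longrightarrow> A \<noteq> {} \<Longrightarrow> (Inf A = c) = (c \<in> A \<and> (\<forall>x\<in>A. c \<le> x))"
  by (simp add: cInf_eq_Min Min_eq_iff)

lemma feval_vals:
  assumes pa: "pa_model N"
  shows "range \<sigma> \<subseteq> Mdom N \<Longrightarrow> (\<forall>p\<in>set_afml a. \<pi> p \<in> Mdom N) \<Longrightarrow> feval N \<pi> \<sigma> a \<in> vals a"
proof (induct a arbitrary: \<sigma>)
  case (Dst s t)
  have "teval N \<pi> \<sigma> s \<in> Mdom N" "teval N \<pi> \<sigma> t \<in> Mdom N"
    using Dst teval_in[OF pa_mb[OF pa], of \<sigma> s \<pi>] teval_in[OF pa_mb[OF pa], of \<sigma> t \<pi>] by auto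
  then show ?case by (simp add: pa_d[OF pa])
next
  case (Pls a b)
  then have "feval N \<pi> \<sigma> a \<in> vals a" "feval N \<pi> \<sigma> b \<in> vals b" by auto
  then show ?case by force
next
  case (Scl r a)
  then have "feval N \<pi> \<sigma> a \<in> vals a" by auto
  then show ?case by force
next
  case (SupQ v a)
  let ?A = "(\<lambda>x. feval N \<pi> (\<sigma>(v := x)) a) ` Mdom N"
  have sub: "?A \<subseteq> vals a" using SupQ by (auto intro!: SupQ.hyps range_upd)
  have fin: "finite ?A" using finite_subset[OF sub finite_vals] .
  have ne: "?A \<noteq> {}" using pa_ne[OF pa] by auto
  have "Sup ?A \<in> ?A" using fin_Sup_eq[OF fin ne] by blast
  then show ?case using sub by auto
next
  case (InfQ v a)
  let ?A = "(\<lambda>x. feval N \<pi> (\<sigma>(v := x)) a) ` Mdom N"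
  have sub: "?A \<subseteq> vals a" using InfQ by (auto intro!: InfQ.hyps range_upd)
  have fin: "finite ?A" using finite_subset[OF sub finite_vals] .
  have ne: "?A \<noteq> {}" using pa_ne[OF pa] by auto
  have "Inf ?A \<in> ?A" using fin_Inf_eq[OF fin ne] by blast
  then show ?case using sub by auto
qed simp

lemma pdef_feval:
  assumes pa: "pa_model N"
  shows "set_afml a = {} \<Longrightarrow> pdef N (\<lambda>\<sigma>. R (feval N \<pi> \<sigma> a))"
proof (induct a arbitrary: R)
  case Cst1 then show ?case using pdef_const by simp
next
  case (Dst s t)
  have "pdef N (\<lambda>\<sigma>. (teval N \<pi> \<sigma> s = teval N \<pi> \<sigma> t \<and> R 0) \<or> (teval N \<pi> \<sigma> s \<noteq> teval N \<pi> \<sigma> t \<and> R 1))"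
    using Dst by (intro pdef_or pdef_and pdef_not pdef_teq[OF pa] pdef_const) auto
  then show ?case
  proof (rule pdef_cong)
    fix \<sigma> :: "nat \<Rightarrow> 'a" assume r: "range \<sigma> \<subseteq> Mdom N"
    have "teval N \<pi> \<sigma> s \<in> Mdom N" "teval N \<pi> \<sigma> t \<in> Mdom N"
      using Dst r teval_in[OF pa_mb[OF pa] r, of s \<pi>] teval_in[OF pa_mb[OF pa] r, of t \<pi>] by auto
    then show "((teval N \<pi> \<sigma> s = teval N \<pi> \<sigma> t \<and> R 0) \<or> (teval N \<pi> \<sigma> s \<noteq> teval N \<pi> \<sigma> t \<and> R 1))
      = R (feval N \<pi> \<sigma> (Dst s t))" by (simp add: pa_d[OF pa])
  qed
next
  case (Pls a b)
  have "pdef N (\<lambda>\<sigma>. \<exists>p\<in>vals a \<times> vals b. R (fst p + snd p) \<and> feval N \<pi> \<sigma> a = fst p \<and> feval N \<pi> \<sigma> b = snd p)"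
    using Pls by (intro pdef_fin_ex pdef_and pdef_const) (auto simp: finite_vals)
  then show ?case
  proof (rule pdef_cong)
    fix \<sigma> :: "nat \<Rightarrow> 'a" assume r: "range \<sigma> \<subseteq> Mdom N"
    have "feval N \<pi> \<sigma> a \<in> vals a" "feval N \<pi> \<sigma> b \<in> vals b"
      using Pls.prems by (auto intro!: feval_vals[OF pa r])
    then show "(\<exists>p\<in>vals a \<times> vals b. R (fst p + snd p) \<and> feval N \<pi> \<sigma> a = fst p \<and> feval N \<pi> \<sigma> b = snd p)
      = R (feval N \<pi> \<sigma> (Pls a b))" by force
  qed
next
  case (Scl r a)
  have "pdef N (\<lambda>\<sigma>. \<exists>x\<in>vals a. R (r * x) \<and> feval N \<pi> \<sigma> a = x)"
    using Scl by (intro pdef_fin_ex pdef_and pdef_const) (auto simp: finite_vals)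
  then show ?case
  proof (rule pdef_cong)
    fix \<sigma> :: "nat \<Rightarrow> 'a" assume rg: "range \<sigma> \<subseteq> Mdom N"
    have "feval N \<pi> \<sigma> a \<in> vals a"
      using Scl.prems by (auto intro!: feval_vals[OF pa rg])
    then show "(\<exists>x\<in>vals a. R (r * x) \<and> feval N \<pi> \<sigma> a = x) = R (feval N \<pi> \<sigma> (Scl r a))" by force
  qed
next
  case (SupQ v a)
  have "pdef N (\<lambda>\<sigma>. \<exists>c\<in>vals a. R c \<and> (\<exists>x\<in>Mdom N. (\<lambda>\<sigma>. feval N \<pi> \<sigma> a = c) (\<sigma>(v := x)))
     \<and> (\<forall>x\<in>Mdom N. (\<lambda>\<sigma>. feval N \<pi> \<sigma> a \<le> c) (\<sigma>(v := x))))"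
    using SupQ by (intro pdef_fin_ex pdef_and pdef_const pdef_ex pdef_all) (auto simp: finite_vals)
  then show ?case
  proof (rule pdef_cong)
    fix \<sigma> :: "nat \<Rightarrow> 'a" assume r: "range \<sigma> \<subseteq> Mdom N"
    let ?A = "(\<lambda>x. feval N \<pi> (\<sigma>(v := x)) a) ` Mdom N"
    have sub: "?A \<subseteq> vals a" using SupQ.prems r by (auto intro!: feval_vals[OF pa] range_upd)
    have fin: "finite ?A" using finite_subset[OF sub finite_vals] .
    have ne: "?A \<noteq> {}" using pa_ne[OF pa] by auto
    show "(\<exists>c\<in>vals a. R c \<and> (\<exists>x\<in>Mdom N. feval N \<pi> (\<sigma>(v := x)) a = c)
     \<and> (\<forall>x\<in>Mdom N. feval N \<pi> (\<sigma>(v := x)) a \<le> c)) = R (feval N \<pi> \<sigma> (SupQ v a))"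
    proof
      assume "\<exists>c\<in>vals a. R c \<and> (\<exists>x\<in>Mdom N. feval N \<pi> (\<sigma>(v := x)) a = c)
        \<and> (\<forall>x\<in>Mdom N. feval N \<pi> (\<sigma>(v := x)) a \<le> c)"
      then obtain c where c: "R c" "c \<in> ?A" "\<forall>x\<in>Mdom N. feval N \<pi> (\<sigma>(v := x)) a \<le> c" by blast
      then have "Sup ?A = c" using fin_Sup_eq[OF fin ne, of c] by blast
      then show "R (feval N \<pi> \<sigma> (SupQ v a))" using c by simp
    next
      let ?S = "Sup ?A"
      assume R: "R (feval N \<pi> \<sigma> (SupQ v a))"
      have "?S \<in> ?A \<and> (\<forall>y\<in>?A. y \<le> ?S)" using fin_Sup_eq[OF fin ne, of ?S] by blast
      then have S: "?S \<in> ?A" "\<forall>x\<in>Mdom N. feval N \<pi> (\<sigma>(v := x)) a \<le> ?S" by auto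
      then show "\<exists>c\<in>vals a. R c \<and> (\<exists>x\<in>Mdom N. feval N \<pi> (\<sigma>(v := x)) a = c)
        \<and> (\<forall>x\<in>Mdom N. feval N \<pi> (\<sigma>(v := x)) a \<le> c)"
        using R sub by (intro bexI[of _ ?S]) auto
    qed
  qed
next
  case (InfQ v a)
  have "pdef N (\<lambda>\<sigma>. \<exists>c\<in>vals a. R c \<and> (\<exists>x\<in>Mdom N. (\<lambda>\<sigma>. feval N \<pi> \<sigma> a = c) (\<sigma>(v := x)))
     \<and> (\<forall>x\<in>Mdom N. (\<lambda>\<sigma>. c \<le> feval N \<pi> \<sigma> a) (\<sigma>(v := x))))"
    using InfQ by (intro pdef_fin_ex pdef_and pdef_const pdef_ex pdef_all) (auto simp: finite_vals)
  then show ?case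
  proof (rule pdef_cong)
    fix \<sigma> :: "nat \<Rightarrow> 'a" assume r: "range \<sigma> \<subseteq> Mdom N"
    let ?A = "(\<lambda>x. feval N \<pi> (\<sigma>(v := x)) a) ` Mdom N"
    have sub: "?A \<subseteq> vals a" using InfQ.prems r by (auto intro!: feval_vals[OF pa] range_upd)
    have fin: "finite ?A" using finite_subset[OF sub finite_vals] .
    have ne: "?A \<noteq> {}" using pa_ne[OF pa] by auto
    show "(\<exists>c\<in>vals a. R c \<and> (\<exists>x\<in>Mdom N. feval N \<pi> (\<sigma>(v := x)) a = c)
     \<and> (\<forall>x\<in>Mdom N. c \<le> feval N \<pi> (\<sigma>(v := x)) a)) = R (feval N \<pi> \<sigma> (InfQ v a))"
    proof
      assume "\<exists>c\<in>vals a. R c \<and> (\<exists>x\<in>Mdom N. feval N \<pi> (\<sigma>(v := x)) a = c)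
        \<and> (\<forall>x\<in>Mdom N. c \<le> feval N \<pi> (\<sigma>(v := x)) a)"
      then obtain c where c: "R c" "c \<in> ?A" "\<forall>x\<in>Mdom N. c \<le> feval N \<pi> (\<sigma>(v := x)) a" by blast
      then have "Inf ?A = c" using fin_Inf_eq[OF fin ne, of c] by blast
      then show "R (feval N \<pi> \<sigma> (InfQ v a))" using c by simp
    next
      let ?S = "Inf ?A"
      assume R: "R (feval N \<pi> \<sigma> (InfQ v a))"
      have "?S \<in> ?A \<and> (\<forall>y\<in>?A. ?S \<le> y)" using fin_Inf_eq[OF fin ne, of ?S] by blast
      then have S: "?S \<in> ?A" "\<forall>x\<in>Mdom N. ?S \<le> feval N \<pi> (\<sigma>(v := x)) a" by auto
      then show "\<exists>c\<in>vals a. R c \<and> (\<exists>x\<in>Mdom N. feval N \<pi> (\<sigma>(v := x)) a = c)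
        \<and> (\<forall>x\<in>Mdom N. c \<le> feval N \<pi> (\<sigma>(v := x)) a)"
        using R sub by (intro bexI[of _ ?S]) auto
    qed
  qed
qed

lemma N_induct:
  assumes pa: "pa_model N" and a: "set_afml a = {}" and r: "range \<sigma> \<subseteq> Mdom N"
    and step: "\<forall>x\<in>Mdom N. feval N \<pi> (\<sigma>(X := Madd N x (Mone N))) a \<le> feval N \<pi> (\<sigma>(X := x)) a"
  shows "\<forall>y\<in>Mdom N. feval N \<pi> (\<sigma>(X := y)) a \<le> feval N \<pi> (\<sigma>(X := Mzero N)) a"
proof -
  let ?c = "feval N \<pi> (\<sigma>(X := Mzero N)) a"
  obtain \<chi> where \<chi>: "\<forall>\<tau>. range \<tau> \<subseteq> Mdom N \<longrightarrow> (pholds N \<tau> \<chi> \<longleftrightarrow> feval N \<pi> \<tau> a \<le> ?c)"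
    using pdef_feval[OF pa a, of "\<lambda>z. z \<le> ?c" \<pi>] unfolding pdef_def by blast
  have "\<forall>y\<in>Mdom N. pholds N (\<sigma>(X := y)) \<chi>"
  proof (rule pa_ind[OF pa r])
    show "pholds N (\<sigma>(X := Mzero N)) \<chi>" using \<chi> range_upd[OF r pa_0[OF pa]] by simp
    show "\<forall>y\<in>Mdom N. pholds N (\<sigma>(X := y)) \<chi> \<longrightarrow> pholds N (\<sigma>(X := Madd N y (Mone N))) \<chi>"
    proof (intro ballI impI)
      fix y assume y: "y \<in> Mdom N" "pholds N (\<sigma>(X := y)) \<chi>"
      have y1: "Madd N y (Mone N) \<in> Mdom N" using pa_add_in[OF pa y(1) pa_1[OF pa]] .
      have "feval N \<pi> (\<sigma>(X := y)) a \<le> ?c" using \<chi> y range_upd[OF r y(1)] by blast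
      then have "feval N \<pi> (\<sigma>(X := Madd N y (Mone N))) a \<le> ?c" using step y(1) by force
      then show "pholds N (\<sigma>(X := Madd N y (Mone N))) \<chi>" using \<chi> range_upd[OF r y1] by blast
    qed
  qed
  then show ?thesis using \<chi> range_upd[OF r] by blast
qed

lemma K_exists:
  assumes "finite (V :: real set)"
  shows "\<exists>K\<ge>0. \<forall>a\<in>V. \<forall>b\<in>V. \<forall>c\<in>V. \<forall>e\<in>V. e < c \<longrightarrow> a - b \<le> K * (c - e)"
proof -
  define D where "D = (\<lambda>(c, e). c - e) ` {p \<in> V \<times> V. snd p < fst p}"
  have finD: "finite D" unfolding D_def using assms by auto
  have memD: "\<And>c e. c \<in> V \<Longrightarrow> e \<in> V \<Longrightarrow> e < c \<Longrightarrow> c - e \<in> D"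
    unfolding D_def by (rule image_eqI[of _ _ "(c, e)" for c e]) auto
  have posD: "\<And>d. d \<in> D \<Longrightarrow> 0 < d" unfolding D_def by auto
  show ?thesis
  proof (cases "D = {}")
    case True
    then show ?thesis using memD by (intro exI[of _ 0]) fastforce
  next
    case False
    define \<delta> where "\<delta> = Min D"
    define \<Delta> where "\<Delta> = Max D"
    have \<delta>pos: "0 < \<delta>" unfolding \<delta>_def using Min_in[OF finD False] posD by blast
    have \<delta>le: "\<And>d. d \<in> D \<Longrightarrow> \<delta> \<le> d" unfolding \<delta>_def using finD by simp
    have \<Delta>ge: "\<And>d. d \<in> D \<Longrightarrow> d \<le> \<Delta>" unfolding \<Delta>_def using finD by simp
    have \<Delta>pos: "0 < \<Delta>" unfolding \<Delta>_def using Max_in[OF finD False] posD by blast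
    show ?thesis
    proof (intro exI[of _ "\<Delta> / \<delta>"] conjI ballI impI)
      show "0 \<le> \<Delta> / \<delta>" using \<delta>pos \<Delta>pos by simp
      fix a b c e assume abce: "a \<in> V" "b \<in> V" "c \<in> V" "e \<in> V" "e < c"
      have ce: "\<delta> \<le> c - e" using \<delta>le memD abce by blast
      have "\<Delta> = \<Delta> / \<delta> * \<delta>" using \<delta>pos by simp
      also have "\<dots> \<le> \<Delta> / \<delta> * (c - e)" using ce \<delta>pos \<Delta>pos by (intro mult_left_mono) auto
      finally have 1: "\<Delta> \<le> \<Delta> / \<delta> * (c - e)" .
      show "a - b \<le> \<Delta> / \<delta> * (c - e)"
      proof (cases "b < a")
        case True
        then have "a - b \<le> \<Delta>" using \<Delta>ge memD abce by blast
        then show ?thesis using 1 by linarith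
      next
        case False
        then have "a - b \<le> 0" by simp
        moreover have "0 \<le> \<Delta> / \<delta> * (c - e)" using \<delta>pos \<Delta>pos abce by simp
        ultimately show ?thesis by linarith
      qed
    qed
  qed
qed

definition num :: "('a, 'b) lstruct_scheme \<Rightarrow> nat \<Rightarrow> 'a" where
  "num N k = ((\<lambda>z. Madd N z (Mone N)) ^^ k) (Mzero N)"

lemma num_in: "pa_model N \<Longrightarrow> num N k \<in> Mdom N"
  by (induct k) (auto simp: num_def pa_0 pa_1 pa_add_in)

lemma pigeon:
  assumes pa: "pa_model N" and fin: "finite V" and GV: "\<forall>x\<in>Mdom N. G x \<in> V"
  shows "\<exists>x\<in>Mdom N. (G x :: real) \<le> G (Madd N x (Mone N))"
proof (rule ccontr)
  assume "\<not> ?thesis"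
  then have lt: "\<forall>x\<in>Mdom N. G (Madd N x (Mone N)) < G x" by force
  define h where "h k = - G (num N k)" for k
  have "\<And>k. h k < h (Suc k)" unfolding h_def using lt num_in[OF pa] by (simp add: num_def)
  then have "strict_mono h" by (simp add: strict_mono_Suc_iff)
  then have "inj h" by (rule strict_mono_imp_inj_on)
  moreover have "range h \<subseteq> uminus ` V" unfolding h_def using GV num_in[OF pa] by auto
  then have "finite (range h)" using fin finite_subset by blast
  ultimately have "finite (UNIV :: nat set)" using finite_imageD by blast
  then show False by simp
qed

lemma N_ineq:
  assumes pa: "pa_model N" and fin: "finite V" and GV: "\<forall>x\<in>Mdom N. G x \<in> V"
    and K0: "K \<ge> 0" and K: "\<forall>a\<in>V. \<forall>b\<in>V. \<forall>c\<in>V. \<forall>e\<in>V. e < c \<longrightarrow> a - b \<le> K * (c - e)"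
    and ind: "(\<forall>x\<in>Mdom N. G (Madd N x (Mone N)) \<le> G x) \<Longrightarrow> (\<forall>y\<in>Mdom N. G y \<le> G (Mzero N))"
    and y: "y \<in> Mdom N"
  shows "G y - G (Mzero N) - K * (SUP x\<in>Mdom N. G (Madd N x (Mone N)) - G x) \<le> (0::real)"
proof -
  let ?A = "(\<lambda>x. G (Madd N x (Mone N)) - G x) ` Mdom N"
  let ?S = "Sup ?A"
  have sub: "?A \<subseteq> (\<lambda>(c, e). c - e) ` (V \<times> V)" using GV pa_add_in[OF pa] pa_1[OF pa] by fastforce
  have finA: "finite ?A" using finite_subset[OF sub] fin by auto
  have up: "\<And>x. x \<in> Mdom N \<Longrightarrow> G (Madd N x (Mone N)) - G x \<le> ?S"
    using finA by (intro cSUP_upper) (auto intro: bdd_above_finite)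
  obtain x0 where x0: "x0 \<in> Mdom N" "G x0 \<le> G (Madd N x0 (Mone N))" using pigeon[OF pa fin GV] by blast
  have S0: "0 \<le> ?S" using up[OF x0(1)] x0(2) by linarith
  have in1: "\<And>x. x \<in> Mdom N \<Longrightarrow> G (Madd N x (Mone N)) \<in> V" using GV pa_add_in[OF pa] pa_1[OF pa] by blast
  show ?thesis
  proof (cases "G y \<le> G (Mzero N)")
    case True
    then show ?thesis using S0 K0 by (simp add: mult_nonneg_nonneg) (smt (verit) mult_nonneg_nonneg)
  next
    case False
    then obtain x where x: "x \<in> Mdom N" "G x < G (Madd N x (Mone N))" using ind y by force
    have "G y - G (Mzero N) \<le> K * (G (Madd N x (Mone N)) - G x)"
      using K GV y pa_0[OF pa] x in1 by blast
    also have "\<dots> \<le> K * ?S" using up[OF x(1)] K0 by (rule mult_left_mono)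
    finally show ?thesis by simp
  qed
qed

definition Theta :: "'a afml \<Rightarrow> ('a \<Rightarrow> 'a trm) \<Rightarrow> nat \<Rightarrow> nat \<Rightarrow> real \<Rightarrow> 'a afml" where
  "Theta \<phi> \<tau> X Y K = Pls (Pls (fsub (\<lambda>u. Var Y) \<tau> \<phi>) (Scl (-1) (fsub (\<lambda>u. Zero) \<tau> \<phi>)))
     (Scl (-K) (SupQ X (Pls (fsub (\<lambda>u. Add (Var X) One) \<tau> \<phi>) (Scl (-1) (fsub (\<lambda>u. Var X) \<tau> \<phi>)))))"

lemma eval_fsub_const:
  assumes "\<forall>p. tvars (\<tau> p) \<inter> bvars \<phi> = {}" "tvars r \<inter> bvars \<phi> = {}"
  shows "feval S \<pi> \<sigma> (fsub (\<lambda>u. r) \<tau> \<phi>) = feval S (\<lambda>p. teval S \<pi> \<sigma> (\<tau> p)) (\<lambda>u. teval S \<pi> \<sigma> r) \<phi>"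
  using assms by (intro fsub_eval) auto

lemma eval_Fx:
  assumes "\<forall>p. tvars (\<tau> p) \<inter> bvars \<phi> = {}" "\<forall>p. X \<notin> tvars (\<tau> p)" "X \<notin> bvars \<phi>"
  shows "feval S \<pi> (\<sigma>(X := x)) (fsub (\<lambda>u. Var X) \<tau> \<phi>) = feval S (\<lambda>p. teval S \<pi> \<sigma> (\<tau> p)) (\<lambda>u. x) \<phi>"
proof -
  have "feval S \<pi> (\<sigma>(X := x)) (fsub (\<lambda>u. Var X) \<tau> \<phi>) = feval S (\<lambda>p. teval S \<pi> \<sigma> (\<tau> p)) (\<lambda>u. teval S \<pi> (\<sigma>(X := x)) (Var X)) \<phi>"
  proof (rule fsub_eval)
    show "\<forall>p\<in>set_afml \<phi>. teval S \<pi> (\<sigma>(X := x)) (\<tau> p) = teval S \<pi> \<sigma> (\<tau> p)"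
      using assms(2) by (intro ballI teval_cong) auto
  qed (use assms in auto)
  then show ?thesis by simp
qed

lemma eval_Fx1:
  assumes "\<forall>p. tvars (\<tau> p) \<inter> bvars \<phi> = {}" "\<forall>p. X \<notin> tvars (\<tau> p)" "X \<notin> bvars \<phi>"
  shows "feval S \<pi> (\<sigma>(X := x)) (fsub (\<lambda>u. Add (Var X) One) \<tau> \<phi>)
     = feval S (\<lambda>p. teval S \<pi> \<sigma> (\<tau> p)) (\<lambda>u. Madd S x (Mone S)) \<phi>"
proof -
  have "feval S \<pi> (\<sigma>(X := x)) (fsub (\<lambda>u. Add (Var X) One) \<tau> \<phi>) =
     feval S (\<lambda>p. teval S \<pi> \<sigma> (\<tau> p)) (\<lambda>u. teval S \<pi> (\<sigma>(X := x)) (Add (Var X) One)) \<phi>"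
  proof (rule fsub_eval)
    show "\<forall>p\<in>set_afml \<phi>. teval S \<pi> (\<sigma>(X := x)) (\<tau> p) = teval S \<pi> \<sigma> (\<tau> p)"
      using assms(2) by (intro ballI teval_cong) auto
  qed (use assms in auto)
  then show ?thesis by simp
qed

lemma eval_Theta:
  fixes S \<pi> \<sigma>
  assumes "\<forall>p. tvars (\<tau> p) \<inter> bvars \<phi> = {}" "\<forall>p. X \<notin> tvars (\<tau> p)" "X \<notin> bvars \<phi>" "Y \<notin> bvars \<phi>"
  defines "G \<equiv> \<lambda>x. feval S (\<lambda>p. teval S \<pi> \<sigma> (\<tau> p)) (\<lambda>u. x) \<phi>"
  shows "feval S \<pi> \<sigma> (Theta \<phi> \<tau> X Y K) = G (\<sigma> Y) - G (Mzero S) - K * (SUP x\<in>Mdom S. G (Madd S x (Mone S)) - G x)"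
proof -
  have 1: "feval S \<pi> \<sigma> (fsub (\<lambda>u. Var Y) \<tau> \<phi>) = G (\<sigma> Y)"
    unfolding G_def using assms(1,4) by (subst eval_fsub_const) auto
  have 2: "feval S \<pi> \<sigma> (fsub (\<lambda>u. Zero) \<tau> \<phi>) = G (Mzero S)"
    unfolding G_def using assms(1) by (subst eval_fsub_const) auto
  have 3: "\<And>x. feval S \<pi> (\<sigma>(X := x)) (Pls (fsub (\<lambda>u. Add (Var X) One) \<tau> \<phi>) (Scl (-1) (fsub (\<lambda>u. Var X) \<tau> \<phi>)))
     = G (Madd S x (Mone S)) - G x"
  proof -
    fix x
    have a: "feval S \<pi> (\<sigma>(X := x)) (fsub (\<lambda>u. Var X) \<tau> \<phi>) = G x"
      unfolding G_def by (rule eval_Fx[OF assms(1-3)])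
    have b: "feval S \<pi> (\<sigma>(X := x)) (fsub (\<lambda>u. Add (Var X) One) \<tau> \<phi>) = G (Madd S x (Mone S))"
      unfolding G_def by (rule eval_Fx1[OF assms(1-3)])
    show "feval S \<pi> (\<sigma>(X := x)) (Pls (fsub (\<lambda>u. Add (Var X) One) \<tau> \<phi>) (Scl (-1) (fsub (\<lambda>u. Var X) \<tau> \<phi>)))
     = G (Madd S x (Mone S)) - G x" using a b by simp
  qed
  show ?thesis unfolding Theta_def using 1 2 3 by simp
qed

lemma key_lemma:
  fixes M :: "('a, 'b) lstruct_scheme" and \<phi> :: "'a afml"
  assumes AA: "models_AA M" and fv: "fvars \<phi> \<subseteq> {0}" and ps: "set_afml \<phi> \<subseteq> Mdom M"
    and step: "\<forall>x\<in>Mdom M. feval M id (\<lambda>_. Madd M x (Mone M)) \<phi> \<le> feval M id (\<lambda>_. x) \<phi>"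
    and a: "a \<in> Mdom M"
  shows "feval M id (\<lambda>_. a) \<phi> \<le> feval M id (\<lambda>_. Mzero M) \<phi>"
proof -
  define P where "P = set_afml \<phi>"
  have finP: "finite P" unfolding P_def by (rule finite_set_afml)
  obtain h :: "'a \<Rightarrow> nat" and n where h: "h ` P = {i. i < n}" "inj_on h P" using finite_imp_inj_to_nat_seg[OF finP] by auto
  define m where "m = Suc (Max (insert 0 (bvars \<phi>)))"
  have mb: "\<And>b. b \<in> bvars \<phi> \<Longrightarrow> b < m"
    unfolding m_def using finite_bvars[of \<phi>] by (simp add: le_imp_less_Suc)
  define g where "g p = m + 2 + h p" for p
  define \<tau> :: "'a \<Rightarrow> 'a trm" where "\<tau> p = (if p \<in> P then Var (g p) else Zero)" for p
  define X where "X = m"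
  define Y where "Y = Suc m"
  obtain K where K0: "K \<ge> 0" and K: "\<forall>a\<in>vals \<phi>. \<forall>b\<in>vals \<phi>. \<forall>c\<in>vals \<phi>. \<forall>e\<in>vals \<phi>. e < c \<longrightarrow> a - b \<le> K * (c - e)"
    using K_exists[OF finite_vals[of \<phi>]] by auto
  define \<Theta> where "\<Theta> = Theta \<phi> \<tau> X Y K"
  define sent where "sent = close [0..<m + 2 + n] \<Theta>"
  have c1: "\<forall>p. tvars (\<tau> p) \<inter> bvars \<phi> = {}"
  proof
    fix p show "tvars (\<tau> p) \<inter> bvars \<phi> = {}"
    proof (cases "p \<in> P")
      case True
      have "m + 2 + h p \<notin> bvars \<phi>" using mb[of "m + 2 + h p"] by linarith
      then show ?thesis using True unfolding \<tau>_def g_def by simp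
    qed (simp add: \<tau>_def)
  qed
  have c2: "\<forall>p. X \<notin> tvars (\<tau> p)" unfolding \<tau>_def g_def X_def by auto
  have c3: "X \<notin> bvars \<phi>" "Y \<notin> bvars \<phi>" unfolding X_def Y_def using mb[of m] mb[of "Suc m"] by auto
  have \<tau>free: "\<forall>p. set_trm (\<tau> p) = {}" unfolding \<tau>_def by auto
  have setF: "\<And>r. set_trm r = {} \<Longrightarrow> set_afml (fsub (\<lambda>u. r) \<tau> \<phi>) = {}"
    using \<tau>free by (intro set_fsub) auto
  have setTh: "set_afml \<Theta> = {}" unfolding \<Theta>_def Theta_def using setF by simp
  have tv\<tau>: "\<And>p. tvars (\<tau> p) \<subseteq> {..<m + 2 + n}"
  proof -
    fix p show "tvars (\<tau> p) \<subseteq> {..<m + 2 + n}"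
    proof (cases "p \<in> P")
      case True
      then have "h p < n" using h(1) by auto
      then show ?thesis using True unfolding \<tau>_def g_def by auto
    qed (simp add: \<tau>_def)
  qed
  have fvF: "\<And>r. tvars r \<subseteq> {..<m + 2 + n} \<Longrightarrow> fvars (fsub (\<lambda>u. r) \<tau> \<phi>) \<subseteq> {..<m + 2 + n}"
  proof -
    fix r :: "'a trm" assume r: "tvars r \<subseteq> {..<m + 2 + n}"
    show "fvars (fsub (\<lambda>u. r) \<tau> \<phi>) \<subseteq> {..<m + 2 + n}"
      using fvars_fsub[of "\<lambda>u. r" \<tau> \<phi>] r tv\<tau> by blast
  qed
  have fvTh: "fvars \<Theta> \<subseteq> {..<m + 2 + n}"
    unfolding \<Theta>_def Theta_def using fvF[of "Var Y"] fvF[of Zero] fvF[of "Add (Var X) One"] fvF[of "Var X"]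
    by (auto simp: X_def Y_def)
  have sentence: "sentence sent"
    unfolding sentence_def sent_def fvars_close set_close using fvTh setTh by auto
  have inAA: "sent \<in> AA"
    unfolding AA_def
  proof (intro CollectI conjI sentence allI impI)
    fix N :: "nat lstruct" assume pa: "pa_model N"
    show "satisfies_cond N sent" unfolding satisfies_cond_def
    proof (intro allI impI)
      fix \<pi> :: "'a \<Rightarrow> nat" and \<sigma> :: "nat \<Rightarrow> nat" assume r: "range \<sigma> \<subseteq> Mdom N"
      show "feval N \<pi> \<sigma> sent \<le> 0" unfolding sent_def
      proof (rule close_N[OF pa_ne[OF pa] _ r], intro allI impI)
        fix \<sigma> :: "nat \<Rightarrow> nat" assume r: "range \<sigma> \<subseteq> Mdom N"
        define G where "G x = feval N (\<lambda>p. teval N \<pi> \<sigma> (\<tau> p)) (\<lambda>u. x) \<phi>" for x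
        have ev: "feval N \<pi> \<sigma> \<Theta> = G (\<sigma> Y) - G (Mzero N) - K * (SUP x\<in>Mdom N. G (Madd N x (Mone N)) - G x)"
          unfolding \<Theta>_def G_def by (rule eval_Theta[OF c1 c2 c3])
        have pin: "\<forall>p\<in>set_afml \<phi>. teval N \<pi> \<sigma> (\<tau> p) \<in> Mdom N"
          using teval_in[OF pa_mb[OF pa] r, of "\<tau> _" \<pi>] \<tau>free by auto
        have GV: "\<forall>x\<in>Mdom N. G x \<in> vals \<phi>"
          unfolding G_def using pin by (auto intro!: feval_vals[OF pa])
        have ind: "\<forall>y\<in>Mdom N. G y \<le> G (Mzero N)" if st: "\<forall>x\<in>Mdom N. G (Madd N x (Mone N)) \<le> G x"
        proof -
          have setFx: "set_afml (fsub (\<lambda>u. Var X) \<tau> \<phi>) = {}" using setF by simp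
          have "\<forall>y\<in>Mdom N. feval N \<pi> (\<sigma>(X := y)) (fsub (\<lambda>u. Var X) \<tau> \<phi>)
               \<le> feval N \<pi> (\<sigma>(X := Mzero N)) (fsub (\<lambda>u. Var X) \<tau> \<phi>)"
            using st by (intro N_induct[OF pa setFx r]) (simp add: eval_Fx[OF c1 c2 c3(1)] G_def)
          then show ?thesis by (simp add: eval_Fx[OF c1 c2 c3(1)] G_def)
        qed
        have "\<sigma> Y \<in> Mdom N" using r by auto
        then show "feval N \<pi> \<sigma> \<Theta> \<le> 0"
          unfolding ev using N_ineq[OF pa finite_vals[of \<phi>] GV K0 K ind] by blast
      qed
    qed
  qed
  then have sat: "satisfies_cond M sent" using AA unfolding models_AA_def by blast
  have mbM: "mbounded M" using AA lstructure_mb unfolding models_AA_def by blast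
  have injg: "inj_on g P" using h(2) unfolding g_def inj_on_def by auto
  define \<sigma> where "\<sigma> u = (if u = Y then a else if u \<in> g ` P then inv_into P g u else Mzero M)" for u
  have z: "Mzero M \<in> Mdom M" using mbM unfolding mbounded_def by blast
  have r: "range \<sigma> \<subseteq> Mdom M"
  proof
    fix y assume "y \<in> range \<sigma>"
    then obtain u where u: "y = \<sigma> u" by blast
    have "inv_into P g u \<in> Mdom M" if "u \<in> g ` P" using inv_into_into[OF that] ps unfolding P_def by blast
    then show "y \<in> Mdom M" unfolding u \<sigma>_def using a z by simp
  qed
  have \<sigma>g: "\<And>p. p \<in> P \<Longrightarrow> \<sigma> (g p) = p"
  proof -
    fix p assume p: "p \<in> P"
    have "g p \<noteq> Y" unfolding g_def Y_def by simp
    moreover have "g p \<in> g ` P" using p by blast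
    ultimately show "\<sigma> (g p) = p" unfolding \<sigma>_def using inv_into_f_f[OF injg p] by simp
  qed
  have \<sigma>Y: "\<sigma> Y = a" unfolding \<sigma>_def by simp
  define F where "F x = feval M id (\<lambda>u. x) \<phi>" for x
  have GF: "feval M (\<lambda>p. teval M id \<sigma> (\<tau> p)) (\<lambda>u. x) \<phi> = F x" for x
    unfolding F_def using \<sigma>g by (intro feval_pcong) (auto simp: \<tau>_def P_def)
  have "feval M id \<sigma> \<Theta> \<le> 0" using sat_close_M[OF mbM _ setTh r] sat unfolding sent_def by blast
  then have le: "F a - F (Mzero M) - K * (SUP x\<in>Mdom M. F (Madd M x (Mone M)) - F x) \<le> 0"
    unfolding \<Theta>_def eval_Theta[OF c1 c2 c3] GF \<sigma>Y .
  have "(SUP x\<in>Mdom M. F (Madd M x (Mone M)) - F x) \<le> 0"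
    using step mbM unfolding F_def mbounded_def by (intro cSUP_least) auto
  then have "K * (SUP x\<in>Mdom M. F (Madd M x (Mone M)) - F x) \<le> 0" using K0 by (simp add: mult_nonneg_nonpos)
  then show ?thesis using le unfolding F_def by simp
qed

section \<open>Basic facts about structures\<close>

context
  fixes M :: "('a, 'b) lstruct_scheme"
  assumes ls: "lstructure M"
begin

lemma ls_ne: "Mdom M \<noteq> {}" using ls unfolding lstructure_def by (elim conjE) blast
lemma ls_0: "Mzero M \<in> Mdom M" using ls unfolding lstructure_def by (elim conjE) blast
lemma ls_1: "Mone M \<in> Mdom M" using ls unfolding lstructure_def by (elim conjE) blast
lemma ls_d0: "x \<in> Mdom M \<Longrightarrow> y \<in> Mdom M \<Longrightarrow> 0 \<le> Md M x y" using ls unfolding lstructure_def by (elim conjE) blast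
lemma ls_deq: "x \<in> Mdom M \<Longrightarrow> y \<in> Mdom M \<Longrightarrow> Md M x y = 0 \<longleftrightarrow> x = y" using ls unfolding lstructure_def by (elim conjE) blast
lemma ls_sym: "x \<in> Mdom M \<Longrightarrow> y \<in> Mdom M \<Longrightarrow> Md M x y = Md M y x" using ls unfolding lstructure_def by (elim conjE) blast
lemma ls_tri: "x \<in> Mdom M \<Longrightarrow> y \<in> Mdom M \<Longrightarrow> z \<in> Mdom M \<Longrightarrow> Md M x z \<le> Md M x y + Md M y z"
  using ls unfolding lstructure_def by (elim conjE) blast
lemma ls_complete: "m_complete M" using ls unfolding lstructure_def by (elim conjE) blast
lemma ls_add_in: "x \<in> Mdom M \<Longrightarrow> y \<in> Mdom M \<Longrightarrow> Madd M x y \<in> Mdom M"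
  using ls unfolding lstructure_def lip_op_def by (elim conjE) blast
lemma ls_meet_in: "x \<in> Mdom M \<Longrightarrow> y \<in> Mdom M \<Longrightarrow> Mmeet M x y \<in> Mdom M"
  using ls unfolding lstructure_def lip_op_def by (elim conjE) blast
lemma ls_lip_add: "x \<in> Mdom M \<Longrightarrow> x' \<in> Mdom M \<Longrightarrow> y \<in> Mdom M \<Longrightarrow> y' \<in> Mdom M \<Longrightarrow>
   Md M (Madd M x y) (Madd M x' y') \<le> max (Md M x x') (Md M y y')"
  using ls unfolding lstructure_def lip_op_def by (elim conjE) blast

lemma ls_lip1: "x \<in> Mdom M \<Longrightarrow> x' \<in> Mdom M \<Longrightarrow> Md M (Madd M x (Mone M)) (Madd M x' (Mone M)) \<le> Md M x x'"
  using ls_lip_add[OF _ _ ls_1 ls_1, of x x'] ls_deq[OF ls_1 ls_1] ls_d0[of x x'] by simp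

lemma dist_nonneg: "D \<subseteq> Mdom M \<Longrightarrow> D \<noteq> {} \<Longrightarrow> x \<in> Mdom M \<Longrightarrow> 0 \<le> dist_to M D x"
  unfolding dist_to_def by (rule cINF_greatest) (auto intro: ls_d0)

lemma dist_bdd: "D \<subseteq> Mdom M \<Longrightarrow> x \<in> Mdom M \<Longrightarrow> bdd_below ((\<lambda>y. Md M x y) ` D)"
  by (rule bdd_belowI[of _ 0]) (auto intro: ls_d0)

lemma dist_le: "D \<subseteq> Mdom M \<Longrightarrow> x \<in> Mdom M \<Longrightarrow> y \<in> D \<Longrightarrow> dist_to M D x \<le> Md M x y"
  unfolding dist_to_def by (rule cINF_lower[OF dist_bdd])

lemma dist_ge: "D \<noteq> {} \<Longrightarrow> (\<And>y. y \<in> D \<Longrightarrow> c \<le> Md M x y) \<Longrightarrow> c \<le> dist_to M D x"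
  unfolding dist_to_def by (rule cINF_greatest)

lemma dist_zero: "D \<subseteq> Mdom M \<Longrightarrow> x \<in> D \<Longrightarrow> dist_to M D x = 0"
proof -
  assume D: "D \<subseteq> Mdom M" and x: "x \<in> D"
  have xm: "x \<in> Mdom M" using D x by blast
  have "dist_to M D x \<le> 0" using dist_le[OF D xm x] ls_deq[OF xm xm] by simp
  moreover have "0 \<le> dist_to M D x" using dist_nonneg[OF D _ xm] x by blast
  ultimately show ?thesis by simp
qed

lemma dist_pos:
  assumes D: "m_closed M D" "D \<noteq> {}" and x: "x \<in> Mdom M" "x \<notin> D"
  shows "0 < dist_to M D x"
proof (rule ccontr)
  have Dm: "D \<subseteq> Mdom M" using D(1) unfolding m_closed_def by blast
  assume "\<not> 0 < dist_to M D x"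
  then have "dist_to M D x < inverse (real (Suc n))" for n
  proof -
    have "0 < inverse (real (Suc n))" by simp
    then show ?thesis using \<open>\<not> 0 < dist_to M D x\<close> by linarith
  qed
  then have "\<exists>y. y \<in> D \<and> Md M x y < inverse (real (Suc n))" for n
    using cINF_less_iff[OF D(2) dist_bdd[OF Dm x(1)]] unfolding dist_to_def by blast
  then have "\<forall>n. \<exists>y. y \<in> D \<and> Md M x y < inverse (real (Suc n))" by blast
  from choice[OF this] obtain s where s0: "\<forall>n. s n \<in> D \<and> Md M x (s n) < inverse (real (Suc n))" by blast
  then have s: "\<And>n. s n \<in> D" "\<And>n. Md M x (s n) < inverse (real (Suc n))" by auto
  have "m_converges M s x" unfolding m_converges_def
  proof (intro allI impI)
    fix e :: real assume e: "0 < e"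
    obtain N where N: "inverse (real (Suc N)) < e" using reals_Archimedean[OF e] by blast
    have "\<forall>n\<ge>N. Md M (s n) x < e"
    proof (intro allI impI)
      fix n assume n: "N \<le> n"
      have i: "inverse (real (Suc n)) \<le> inverse (real (Suc N))" using n by (simp add: le_imp_inverse_le)
      have "s n \<in> Mdom M" using s(1)[of n] Dm by blast
      then have "Md M (s n) x = Md M x (s n)" using ls_sym[OF x(1)] by simp
      then show "Md M (s n) x < e" using s(2)[of n] N i by linarith
    qed
    then show "\<exists>N. \<forall>n\<ge>N. Md M (s n) x < e" by blast
  qed
  then have "x \<in> D" using D(1) s(1) x(1) unfolding m_closed_def by blast
  then show False using x(2) by blast
qed

lemma pred_exact:
  assumes canc: "\<forall>x\<in>Mdom M. \<forall>z\<in>Mdom M. Md M x z \<le> Md M (Madd M x (Mone M)) (Madd M z (Mone M))"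
    and y: "y \<in> Mdom M"
    and approx: "\<forall>e>0. \<exists>z\<in>Mdom M. Md M (Madd M z (Mone M)) y < e"
  shows "\<exists>z\<in>Mdom M. Madd M z (Mone M) = y"
proof -
  have "\<forall>n. \<exists>z. z \<in> Mdom M \<and> Md M (Madd M z (Mone M)) y < inverse (real (Suc n))"
  proof
    fix n have "0 < inverse (real (Suc n))" by simp
    then show "\<exists>z. z \<in> Mdom M \<and> Md M (Madd M z (Mone M)) y < inverse (real (Suc n))" using approx by blast
  qed
  from choice[OF this] obtain s where s0: "\<forall>n. s n \<in> Mdom M \<and> Md M (Madd M (s n) (Mone M)) y < inverse (real (Suc n))" by blast
  then have s: "\<And>n. s n \<in> Mdom M" "\<And>n. Md M (Madd M (s n) (Mone M)) y < inverse (real (Suc n))" by auto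
  have s1: "\<And>n. Madd M (s n) (Mone M) \<in> Mdom M" using s(1) ls_add_in ls_1 by blast
  have "\<forall>e>0. \<exists>N. \<forall>m\<ge>N. \<forall>n\<ge>N. Md M (s m) (s n) < e"
  proof (intro allI impI)
    fix e :: real assume e: "0 < e"
    obtain N where N: "inverse (real (Suc N)) < e / 2" using reals_Archimedean[of "e/2"] e by auto
    have "\<forall>m\<ge>N. \<forall>n\<ge>N. Md M (s m) (s n) < e"
    proof (intro allI impI)
      fix m n assume mn: "N \<le> m" "N \<le> n"
      have im: "inverse (real (Suc m)) \<le> inverse (real (Suc N))" using mn by (simp add: le_imp_inverse_le)
      have inn: "inverse (real (Suc n)) \<le> inverse (real (Suc N))" using mn by (simp add: le_imp_inverse_le)
      have "Md M (s m) (s n) \<le> Md M (Madd M (s m) (Mone M)) (Madd M (s n) (Mone M))" using canc s(1) by blast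
      also have "\<dots> \<le> Md M (Madd M (s m) (Mone M)) y + Md M y (Madd M (s n) (Mone M))"
        using ls_tri[OF s1 y s1] .
      also have "\<dots> = Md M (Madd M (s m) (Mone M)) y + Md M (Madd M (s n) (Mone M)) y"
        using ls_sym[OF y s1] by simp
      also have "\<dots> < e" using s(2)[of m] s(2)[of n] im inn N by linarith
      finally show "Md M (s m) (s n) < e" .
    qed
    then show "\<exists>N. \<forall>m\<ge>N. \<forall>n\<ge>N. Md M (s m) (s n) < e" by blast
  qed
  then obtain z where z: "z \<in> Mdom M" "m_converges M s z"
    using ls_complete s(1) unfolding m_complete_def by blast
  have z1: "Madd M z (Mone M) \<in> Mdom M" using z(1) ls_add_in ls_1 by blast
  have small: "Md M (Madd M z (Mone M)) y < e" if e: "0 < e" for e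
  proof -
    have e2: "0 < e / 2" using e by simp
    obtain N1 where N1: "\<forall>n\<ge>N1. Md M (s n) z < e / 2" using z(2) e2 unfolding m_converges_def by blast
    obtain N2 where N2: "inverse (real (Suc N2)) < e / 2" using reals_Archimedean[of "e/2"] e by auto
    define n where "n = max N1 N2"
    have in2: "inverse (real (Suc n)) \<le> inverse (real (Suc N2))" unfolding n_def by (simp add: le_imp_inverse_le)
    have "Md M (Madd M z (Mone M)) y \<le> Md M (Madd M z (Mone M)) (Madd M (s n) (Mone M)) + Md M (Madd M (s n) (Mone M)) y"
      using ls_tri[OF z1 s1 y] .
    also have "\<dots> \<le> Md M z (s n) + Md M (Madd M (s n) (Mone M)) y"
      using ls_lip1[OF z(1) s(1)] by simp
    also have "\<dots> = Md M (s n) z + Md M (Madd M (s n) (Mone M)) y" using ls_sym[OF z(1) s(1)] by simp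
    also have "\<dots> < e"
    proof -
      have "N1 \<le> n" unfolding n_def by simp
      then have "Md M (s n) z < e / 2" using N1 by blast
      then show ?thesis using s(2)[of n] in2 N2 by linarith
    qed
    finally show ?thesis .
  qed
  have "Md M (Madd M z (Mone M)) y = 0"
  proof (rule ccontr)
    assume "Md M (Madd M z (Mone M)) y \<noteq> 0"
    then have "0 < Md M (Madd M z (Mone M)) y" using ls_d0[OF z1 y] by simp
    then show False using small[of "Md M (Madd M z (Mone M)) y"] by simp
  qed
  then show ?thesis using ls_deq[OF z1 y] z(1) by blast
qed

end

section \<open>Concrete sentences of AA\<close>

definition S1 :: "'a afml" where "S1 = close [0] (Dst (Meet Zero (Var 0)) Zero)"
definition S2 :: "'a afml" where
  "S2 = close [0, 1] (Pls (Dst (Var 0) (Var 1)) (Scl (-1) (Dst (Add (Var 0) One) (Add (Var 1) One))))"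
definition B3 :: "'a afml" where
  "B3 = Pls (Dst (Add (Var 1) One) (Var 0)) (Scl (-1) (Dst (Meet One (Var 0)) One))"
definition S3 :: "'a afml" where "S3 = close [0] (InfQ 1 B3)"

lemma S1_AA: "S1 \<in> AA"
  unfolding AA_def
proof (intro CollectI conjI allI impI)
  show "sentence (S1 :: 'a afml)" unfolding S1_def sentence_def by simp
  fix N :: "nat lstruct" assume pa: "pa_model N"
  show "satisfies_cond N (S1 :: 'a afml)" unfolding satisfies_cond_def S1_def
  proof (intro allI impI close_N[OF pa_ne[OF pa]])
    fix \<pi> :: "'a \<Rightarrow> nat" and \<sigma> :: "nat \<Rightarrow> nat" assume r: "range \<sigma> \<subseteq> Mdom N"
    then have y: "\<sigma> 0 \<in> Mdom N" by auto
    have "pa_le N (Mzero N) (\<sigma> 0)" unfolding pa_le_def using pa_zero_add[OF pa y] y by blast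
    then show "feval N \<pi> \<sigma> (Dst (Meet Zero (Var 0)) Zero) \<le> 0"
      using y pa_0[OF pa] by (simp add: pa_meet[OF pa] pa_d[OF pa])
  qed
qed

lemma S2_AA: "S2 \<in> AA"
  unfolding AA_def
proof (intro CollectI conjI allI impI)
  show "sentence (S2 :: 'a afml)" unfolding S2_def sentence_def by auto
  fix N :: "nat lstruct" assume pa: "pa_model N"
  show "satisfies_cond N (S2 :: 'a afml)" unfolding satisfies_cond_def S2_def
  proof (intro allI impI close_N[OF pa_ne[OF pa]])
    fix \<pi> :: "'a \<Rightarrow> nat" and \<sigma> :: "nat \<Rightarrow> nat" assume r: "range \<sigma> \<subseteq> Mdom N"
    then have y: "\<sigma> 0 \<in> Mdom N" "\<sigma> 1 \<in> Mdom N" by auto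
    have i: "Madd N (\<sigma> 0) (Mone N) \<in> Mdom N" "Madd N (\<sigma> 1) (Mone N) \<in> Mdom N"
      using y pa_add_in[OF pa] pa_1[OF pa] by auto
    show "feval N \<pi> \<sigma> (Pls (Dst (Var 0) (Var 1)) (Scl (-1) (Dst (Add (Var 0) One) (Add (Var 1) One)))) \<le> 0"
      using y i pa_sinj[OF pa y] by (simp add: pa_d[OF pa])
  qed
qed

lemma S3_AA: "S3 \<in> AA"
  unfolding AA_def
proof (intro CollectI conjI allI impI)
  show "sentence (S3 :: 'a afml)" unfolding S3_def B3_def sentence_def by auto
  fix N :: "nat lstruct" assume pa: "pa_model N"
  show "satisfies_cond N (S3 :: 'a afml)" unfolding satisfies_cond_def S3_def
  proof (intro allI impI close_N[OF pa_ne[OF pa]])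
    fix \<pi> :: "'a \<Rightarrow> nat" and \<sigma> :: "nat \<Rightarrow> nat" assume r: "range \<sigma> \<subseteq> Mdom N"
    then have y: "\<sigma> 0 \<in> Mdom N" by auto
    have bdd: "bdd_below ((\<lambda>x. feval N \<pi> (\<sigma>(1 := x)) B3) ` Mdom N)"
      by (rule feval_bdd_below[OF pa_mb[OF pa] r]) (simp add: B3_def)
    have "\<exists>z\<in>Mdom N. feval N \<pi> (\<sigma>(1 := z)) B3 \<le> 0"
    proof (cases "\<sigma> 0 = Mzero N")
      case True
      have "Mmeet N (Mone N) (Mzero N) = Mzero N"
        using pa_not_le10[OF pa] pa_0[OF pa] pa_1[OF pa] by (simp add: pa_meet[OF pa])
      then have "feval N \<pi> (\<sigma>(1 := Mzero N)) B3 \<le> 0"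
        using True pa_0[OF pa] pa_1[OF pa] pa_add_in[OF pa] pa_sne0[OF pa] pa_one_ne0[OF pa]
        by (simp add: B3_def pa_d[OF pa])
      then show ?thesis using pa_0[OF pa] by blast
    next
      case False
      then obtain z where z: "z \<in> Mdom N" "\<sigma> 0 = Madd N z (Mone N)" using pa_cases[OF pa y] by blast
      have m: "Mmeet N (Mone N) (\<sigma> 0) \<in> Mdom N" using y pa_1[OF pa] pa_mb[OF pa] unfolding mbounded_def by blast
      have "feval N \<pi> (\<sigma>(1 := z)) B3 \<le> 0"
        using z y m pa_1[OF pa] by (simp add: B3_def pa_d[OF pa])
      then show ?thesis using z by blast
    qed
    then obtain z where z: "z \<in> Mdom N" "feval N \<pi> (\<sigma>(1 := z)) B3 \<le> 0" by blast
    have "(INF x\<in>Mdom N. feval N \<pi> (\<sigma>(1 := x)) B3) \<le> 0"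
      using cINF_lower[OF bdd z(1)] z(2) by linarith
    then show "feval N \<pi> \<sigma> (InfQ 1 B3) \<le> 0" by simp
  qed
qed

context
  fixes M :: "('a, 'b) lstruct_scheme"
  assumes AA: "models_AA M"
begin

lemma AA_ls: "lstructure M" using AA unfolding models_AA_def by blast
lemma AA_mb: "mbounded M" using lstructure_mb[OF AA_ls] .
lemma AA_sat: "(\<phi> :: 'a afml) \<in> AA \<Longrightarrow> satisfies_cond M \<phi>" using AA unfolding models_AA_def by blast

lemma M_meet0: "y \<in> Mdom M \<Longrightarrow> Mmeet M (Mzero M) y = Mzero M"
proof -
  assume y: "y \<in> Mdom M"
  have r: "range (\<lambda>_::nat. y) \<subseteq> Mdom M" using y by auto
  have "feval M id (\<lambda>_. y) (Dst (Meet Zero (Var 0)) Zero) \<le> 0"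
    by (rule sat_close_M[OF AA_mb AA_sat[OF S1_AA, unfolded S1_def] _ r]) (simp)
  then have le: "Md M (Mmeet M (Mzero M) y) (Mzero M) \<le> 0" by simp
  have m: "Mmeet M (Mzero M) y \<in> Mdom M" using ls_meet_in[OF AA_ls ls_0[OF AA_ls] y] .
  have "Md M (Mmeet M (Mzero M) y) (Mzero M) = 0" using le ls_d0[OF AA_ls m ls_0[OF AA_ls]] by simp
  then show ?thesis using ls_deq[OF AA_ls m ls_0[OF AA_ls]] by blast
qed

lemma M_canc: "\<forall>x\<in>Mdom M. \<forall>z\<in>Mdom M. Md M x z \<le> Md M (Madd M x (Mone M)) (Madd M z (Mone M))"
proof (intro ballI)
  fix x z assume x: "x \<in> Mdom M" and z: "z \<in> Mdom M"
  define \<sigma> where "\<sigma> v = (if v = 0 then x else z)" for v :: nat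
  have r: "range \<sigma> \<subseteq> Mdom M" using x z unfolding \<sigma>_def by auto
  have "feval M id \<sigma> (Pls (Dst (Var 0) (Var 1)) (Scl (-1) (Dst (Add (Var 0) One) (Add (Var 1) One)))) \<le> 0"
    by (rule sat_close_M[OF AA_mb AA_sat[OF S2_AA, unfolded S2_def] _ r]) (simp)
  then show "Md M x z \<le> Md M (Madd M x (Mone M)) (Madd M z (Mone M))" by (simp add: \<sigma>_def)
qed

lemma M_approx:
  assumes y: "y \<in> Mdom M" and m: "Mmeet M (Mone M) y = Mone M"
  shows "\<forall>e>0. \<exists>z\<in>Mdom M. Md M (Madd M z (Mone M)) y < e"
proof (intro allI impI)
  fix e :: real assume e: "0 < e"
  define \<sigma> where "\<sigma> = (\<lambda>_::nat. y)"
  have r: "range \<sigma> \<subseteq> Mdom M" using y unfolding \<sigma>_def by auto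
  have "feval M id \<sigma> (InfQ 1 B3) \<le> 0"
    by (rule sat_close_M[OF AA_mb AA_sat[OF S3_AA, unfolded S3_def] _ r]) (simp add: B3_def)
  then have "(INF x\<in>Mdom M. feval M id (\<sigma>(1 := x)) B3) < e" using e by simp
  moreover have "bdd_below ((\<lambda>x. feval M id (\<sigma>(1 := x)) B3) ` Mdom M)"
    by (rule feval_bdd_below[OF AA_mb r]) (simp add: B3_def)
  ultimately obtain z where z: "z \<in> Mdom M" "feval M id (\<sigma>(1 := z)) B3 < e"
    using cINF_less_iff[OF ls_ne[OF AA_ls]] by blast
  have "Md M (Mone M) (Mone M) = 0" using ls_deq[OF AA_ls ls_1[OF AA_ls] ls_1[OF AA_ls]] by simp
  then have "Md M (Madd M z (Mone M)) y < e" using z(2) m by (simp add: B3_def \<sigma>_def)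
  then show "\<exists>z\<in>Mdom M. Md M (Madd M z (Mone M)) y < e" using z(1) by blast
qed

end

theorem mainTheorem5:
  fixes M :: "'a lstruct" and I :: "'a set"
  assumes "models_AA M"
    and "proper_cut M I"
  shows "\<not> formula_definable M I \<and>
         ((\<forall>y\<in>Mdom M - I. le_M M (Mone M) y) \<longrightarrow> \<not> formula_definable M (Mdom M - I))"
proof -
  note AA = assms(1)
  have ls: "lstructure M" using AA_ls[OF AA] .
  have Isub: "I \<subseteq> Mdom M" and Ine: "I \<noteq> {}"
    and Idown: "\<forall>x\<in>Mdom M. \<forall>y\<in>I. le_M M x y \<longrightarrow> x \<in> I"
    and Isucc: "\<forall>x\<in>I. Madd M x (Mone M) \<in> I" and Iprop: "I \<noteq> Mdom M"
    using assms(2) unfolding proper_cut_def is_cut_def by blast+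
  have z0: "Mzero M \<in> Mdom M" using ls_0[OF ls] .
  have o1: "Mone M \<in> Mdom M" using ls_1[OF ls] .
  have sin: "\<And>x. x \<in> Mdom M \<Longrightarrow> Madd M x (Mone M) \<in> Mdom M" using ls_add_in[OF ls] o1 by blast
  have zI: "Mzero M \<in> I"
  proof -
    obtain y where y: "y \<in> I" using Ine by blast
    then have "le_M M (Mzero M) y" unfolding le_M_def using M_meet0[OF AA] Isub by blast
    then show ?thesis using Idown z0 y by blast
  qed
  obtain a where a: "a \<in> Mdom M" "a \<notin> I" using Isub Iprop by blast
  have part1: "\<not> formula_definable M I"
  proof
    assume "formula_definable M I"
    then obtain \<phi> :: "'a afml" where cl: "m_closed M I" and fv: "fvars \<phi> \<subseteq> {0}" and ps: "set_afml \<phi> \<subseteq> Mdom M"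
      and df: "\<forall>x\<in>Mdom M. dist_to M I x = feval M id (\<lambda>_. x) \<phi>"
      unfolding formula_definable_def by blast
    have step: "\<forall>x\<in>Mdom M. feval M id (\<lambda>_. Madd M x (Mone M)) \<phi> \<le> feval M id (\<lambda>_. x) \<phi>"
    proof
      fix x assume x: "x \<in> Mdom M"
      have "dist_to M I (Madd M x (Mone M)) \<le> dist_to M I x"
      proof (rule dist_ge[OF ls Ine])
        fix y assume y: "y \<in> I"
        have ym: "y \<in> Mdom M" using y Isub by blast
        have "dist_to M I (Madd M x (Mone M)) \<le> Md M (Madd M x (Mone M)) (Madd M y (Mone M))"
          using dist_le[OF ls Isub sin[OF x]] Isucc y by blast
        also have "\<dots> \<le> Md M x y" using ls_lip1[OF ls x ym] .
        finally show "dist_to M I (Madd M x (Mone M)) \<le> Md M x y" .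
      qed
      then show "feval M id (\<lambda>_. Madd M x (Mone M)) \<phi> \<le> feval M id (\<lambda>_. x) \<phi>"
        using df x sin[OF x] by simp
    qed
    have "feval M id (\<lambda>_. a) \<phi> \<le> feval M id (\<lambda>_. Mzero M) \<phi>"
      by (rule key_lemma[OF AA fv ps step a(1)])
    then have "dist_to M I a \<le> dist_to M I (Mzero M)" using df a(1) z0 by simp
    moreover have "dist_to M I (Mzero M) = 0" using dist_zero[OF ls Isub zI] .
    moreover have "0 < dist_to M I a" using dist_pos[OF ls cl Ine a] .
    ultimately show False by simp
  qed
  have part2: "\<not> formula_definable M (Mdom M - I)" if hyp: "\<forall>y\<in>Mdom M - I. le_M M (Mone M) y"
  proof
    define D where "D = Mdom M - I"
    assume "formula_definable M (Mdom M - I)"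
    then obtain \<phi> :: "'a afml" where cl: "m_closed M D" and fv: "fvars \<phi> \<subseteq> {0}" and ps: "set_afml \<phi> \<subseteq> Mdom M"
      and df: "\<forall>x\<in>Mdom M. dist_to M D x = feval M id (\<lambda>_. x) \<phi>"
      unfolding formula_definable_def D_def by blast
    have Dsub: "D \<subseteq> Mdom M" unfolding D_def by blast
    have Dne: "D \<noteq> {}" unfolding D_def using a by blast
    have fv': "fvars (Scl (-1) \<phi>) \<subseteq> {0}" using fv by simp
    have ps': "set_afml (Scl (-1) \<phi>) \<subseteq> Mdom M" using ps by simp
    have step: "\<forall>x\<in>Mdom M. feval M id (\<lambda>_. Madd M x (Mone M)) (Scl (-1) \<phi>) \<le> feval M id (\<lambda>_. x) (Scl (-1) \<phi>)"
    proof
      fix x assume x: "x \<in> Mdom M"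
      have "dist_to M D x \<le> dist_to M D (Madd M x (Mone M))"
      proof (rule dist_ge[OF ls Dne])
        fix y assume y: "y \<in> D"
        have ym: "y \<in> Mdom M" using y Dsub by blast
        have "Mmeet M (Mone M) y = Mone M" using hyp y unfolding D_def le_M_def by blast
        then obtain z where z: "z \<in> Mdom M" "Madd M z (Mone M) = y"
          using pred_exact[OF ls M_canc[OF AA] ym M_approx[OF AA ym]] by blast
        have "z \<notin> I" using z(2) y Isucc unfolding D_def by blast
        then have zD: "z \<in> D" using z(1) unfolding D_def by blast
        have "dist_to M D x \<le> Md M x z" using dist_le[OF ls Dsub x zD] .
        also have "\<dots> \<le> Md M (Madd M x (Mone M)) (Madd M z (Mone M))" using M_canc[OF AA] x z(1) by blast
        finally show "dist_to M D x \<le> Md M (Madd M x (Mone M)) y" using z(2) by simp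
      qed
      then show "feval M id (\<lambda>_. Madd M x (Mone M)) (Scl (-1) \<phi>) \<le> feval M id (\<lambda>_. x) (Scl (-1) \<phi>)"
        using df x sin[OF x] by simp
    qed
    obtain d where d: "d \<in> D" using Dne by blast
    have dm: "d \<in> Mdom M" using d Dsub by blast
    have "feval M id (\<lambda>_. d) (Scl (-1) \<phi>) \<le> feval M id (\<lambda>_. Mzero M) (Scl (-1) \<phi>)"
      by (rule key_lemma[OF AA fv' ps' step dm])
    then have "dist_to M D (Mzero M) \<le> dist_to M D d" using df dm z0 by simp
    moreover have "dist_to M D d = 0" using dist_zero[OF ls Dsub d] .
    moreover have "0 < dist_to M D (Mzero M)" using dist_pos[OF ls cl Dne z0] zI unfolding D_def by blast
    ultimately show False by simp
  qed
  show ?thesis using part1 part2 by blast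
qed

end
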